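(* Let $(V,\mathbf{1}^\vee,D,\mathcal{Y},\check S)$ be a braided multiplicative vertex coalgebra over a commutative ring $R$. Then: (1) (translation) $\mathcal{Y}(z)D(w)\equiv(\mathrm{id}\otimes D(w))\mathcal{Y}(zw)$; (2) (colocality) $(\check S(w/z)\otimes\mathrm{id})(\mathrm{id}\otimes\mathcal{Y}(w))\mathcal{Y}(z)\equiv(\mathrm{id}\otimes\mathcal{Y}(z))\mathcal{Y}(w)$.
   Context: A braided multiplicative vertex $R$-coalgebra consists of: an $R$-module $V$ with restricted dual $V^*$; a covacuum $\mathbf{1}^\vee\in V^*$; an $R$-linear translation operator $D(z)\colon V\to V[z^{\pm1}]$ with $D(z)D(w)=D(zw)$; a vertex coproduct $\mathcal{Y}(z)\colon V\to V\otimes V(\!(z^{-1})\!)$; and a braiding operator $\check S(z)\colon V\otimes V\to V\otimes V(\!(z^{-1})\!)$ which is unitary, $\check S(z^{-1})\check S(z)=\mathrm{id}$. Axioms: (covacuum) $(\mathbf{1}^\vee\otimes\mathrm{id})\mathcal{Y}(z)=\mathrm{id}$; $(\mathrm{id}\otimes\mathbf{1}^\vee)\mathcal{Y}(z)a\in V[z^{\pm1}]$ with $(\mathrm{id}\otimes\mathbf{1}^\vee)\mathcal{Y}(1)a=a$ for all $a\in V$; $(\mathbf{1}^\vee\otimes\mathrm{id})\check S(z)=\mathrm{id}\otimes\mathbf{1}^\vee$. (skew symmetry) $\check S(z^{-1})\mathcal{Y}(z)=\mathcal{Y}(z^{-1})D(z)$, the left side being well-defined. (weak coassociativity) $(\mathcal{Y}(z)\otimes\mathrm{id})\mathcal{Y}(w)\equiv(\mathrm{id}\otimes\mathcal{Y}(w))\mathcal{Y}(zw)$.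 (Yang–Baxter) $(\check S(z)\otimes\mathrm{id})(\mathrm{id}\otimes\check S(zw))(\check S(w)\otimes\mathrm{id})\equiv(\mathrm{id}\otimes\check S(w))(\check S(zw)\otimes\mathrm{id})(\mathrm{id}\otimes\check S(z))$ and $(\mathcal{Y}(z)\otimes\mathrm{id})\check S(w)\equiv(\mathrm{id}\otimes\check S(w))(\check S(zw)\otimes\mathrm{id})(\mathrm{id}\otimes\mathcal{Y}(z))$. Here, for operators with values in $V^{\otimes n}$ in formal variables $z,w$, $A\equiv B$ means that after applying any element of $(V^* )^{\otimes n}$ both sides belong to, and are equal in, $V^*[\![z^{-1},w^{-1}]\!][z,w]$ (as functionals of the input). *)

theory Defs
  imports Main "HOL.Modules"
begin

text \<open>An element of the tensor
power V^(tensor n) is represented by a finitely supported formal R-combination of length-n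
lists of vectors (a function 'v list => 'r); two representatives denote the same tensor iff
their difference lies in the R-span of the multilinearity relations (relation ten_eq).\<close>

type_synonym ('r,'v) ten = "'v list \<Rightarrow> 'r"

definition fsupp :: "('a \<Rightarrow> 'b::zero) \<Rightarrow> 'a set" where
  "fsupp f = {x. f x \<noteq> 0}"

definition tzero :: "('r::zero,'v) ten" where
  "tzero = (\<lambda>_. 0)"

definition pure :: "'v list \<Rightarrow> ('r::{zero,one},'v) ten" where
  "pure xs = (\<lambda>ys. if ys = xs then 1 else 0)"

definition tadd :: "('r::plus,'v) ten \<Rightarrow> ('r,'v) ten \<Rightarrow> ('r,'v) ten" where
  "tadd s t = (\<lambda>zs. s zs + t zs)"

definition tsmul :: "'r::times \<Rightarrow> ('r,'v) ten \<Rightarrow> ('r,'v) ten" where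
  "tsmul c t = (\<lambda>zs. c * t zs)"

definition tsum :: "'i set \<Rightarrow> ('i \<Rightarrow> ('r::comm_monoid_add,'v) ten) \<Rightarrow> ('r,'v) ten" where
  "tsum F f = (\<lambda>zs. \<Sum>i\<in>F. f i zs)"

definition ftens :: "nat \<Rightarrow> ('r::zero,'v) ten set" where
  "ftens n = {t. finite (fsupp t) \<and> (\<forall>xs\<in>fsupp t. length xs = n)}"

definition ten_gens :: "('r::comm_ring_1 \<Rightarrow> 'v::ab_group_add \<Rightarrow> 'v) \<Rightarrow> nat \<Rightarrow> ('r,'v) ten set" where
  "ten_gens sc n =
     {(\<lambda>zs. pure (xs @ [x + y] @ ys) zs - pure (xs @ [x] @ ys) zs - pure (xs @ [y] @ ys) zs)
        | xs x y ys. Suc (length xs + length ys) = n}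
   \<union> {(\<lambda>zs. pure (xs @ [sc c x] @ ys) zs - c * pure (xs @ [x] @ ys) zs)
        | xs c x ys. Suc (length xs + length ys) = n}"

definition ten_rel :: "('r::comm_ring_1 \<Rightarrow> 'v::ab_group_add \<Rightarrow> 'v) \<Rightarrow> nat \<Rightarrow> ('r,'v) ten set" where
  "ten_rel sc n = {t. \<exists>G c. finite G \<and> G \<subseteq> ten_gens sc n \<and> t = (\<lambda>zs. \<Sum>g\<in>G. c g * g zs)}"

definition ten_eq :: "('r::comm_ring_1 \<Rightarrow> 'v::ab_group_add \<Rightarrow> 'v) \<Rightarrow> nat \<Rightarrow> ('r,'v) ten \<Rightarrow> ('r,'v) ten \<Rightarrow> bool" where
  "ten_eq sc n s t \<longleftrightarrow> s \<in> ftens n \<and> t \<in> ftens n \<and> (\<lambda>zs. s zs - t zs) \<in> ten_rel sc n"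

definition tprod :: "('r::comm_ring_1,'v) ten \<Rightarrow> ('r,'v) ten \<Rightarrow> ('r,'v) ten" where
  "tprod s t = (\<lambda>zs. \<Sum>p\<in>fsupp s \<times> fsupp t. if fst p @ snd p = zs then s (fst p) * t (snd p) else 0)"

definition lin :: "('v list \<Rightarrow> ('r::comm_ring_1,'w) ten) \<Rightarrow> ('r,'v) ten \<Rightarrow> ('r,'w) ten" where
  "lin F t = (\<lambda>zs. \<Sum>xs\<in>fsupp t. t xs * F xs zs)"

definition at1 :: "nat \<Rightarrow> ('v \<Rightarrow> ('r::comm_ring_1,'v) ten) \<Rightarrow> 'v list \<Rightarrow> ('r,'v) ten" where
  "at1 i g xs = tprod (tprod (pure (take i xs)) (g (xs ! i))) (pure (drop (Suc i) xs))"

definition at2 :: "nat \<Rightarrow> ('v \<Rightarrow> 'v \<Rightarrow> ('r::comm_ring_1,'v) ten) \<Rightarrow> 'v list \<Rightarrow> ('r,'v) ten" where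
  "at2 i h xs = tprod (tprod (pure (take i xs)) (h (xs ! i) (xs ! Suc i))) (pure (drop (Suc (Suc i)) xs))"

text \<open>contractions (phi (tensor) id) and (id (tensor) phi) : V (tensor) V -> V\<close>
definition contrL :: "('r::comm_ring_1 \<Rightarrow> 'v::ab_group_add \<Rightarrow> 'v) \<Rightarrow> ('v \<Rightarrow> 'r) \<Rightarrow> ('r,'v) ten \<Rightarrow> 'v" where
  "contrL sc \<phi> t = (\<Sum>xs\<in>fsupp t. sc (t xs * \<phi> (xs ! 0)) (xs ! 1))"

definition contrR :: "('r::comm_ring_1 \<Rightarrow> 'v::ab_group_add \<Rightarrow> 'v) \<Rightarrow> ('v \<Rightarrow> 'r) \<Rightarrow> ('r,'v) ten \<Rightarrow> 'v" where
  "contrR sc \<phi> t = (\<Sum>xs\<in>fsupp t. sc (t xs * \<phi> (xs ! 1)) (xs ! 0))"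

definition has_tsum :: "('r::comm_ring_1 \<Rightarrow> 'v::ab_group_add \<Rightarrow> 'v) \<Rightarrow> nat \<Rightarrow> (int \<Rightarrow> ('r,'v) ten) \<Rightarrow> ('r,'v) ten \<Rightarrow> bool" where
  "has_tsum sc n f T \<longleftrightarrow> (\<exists>F. finite F \<and> (\<forall>j. j \<notin> F \<longrightarrow> ten_eq sc n (f j) tzero) \<and> ten_eq sc n (tsum F f) T)"

text \<open>elements of (V^* )^(tensor n): finite formal combinations of lists of functionals in Vd\<close>
definition dualten :: "('v \<Rightarrow> 'r::comm_ring_1) set \<Rightarrow> nat \<Rightarrow> (('v \<Rightarrow> 'r) list \<Rightarrow> 'r) set" where
  "dualten Vd n = {\<Phi>. finite (fsupp \<Phi>) \<and> (\<forall>\<phi>s\<in>fsupp \<Phi>. length \<phi>s = n \<and> set \<phi>s \<subseteq> Vd)}"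

definition pair :: "(('v \<Rightarrow> 'r::comm_ring_1) list \<Rightarrow> 'r) \<Rightarrow> ('r,'v) ten \<Rightarrow> 'r" where
  "pair \<Phi> t = (\<Sum>\<phi>s\<in>fsupp \<Phi>. \<Sum>xs\<in>fsupp t. \<Phi> \<phi>s * t xs * prod_list (map2 (\<lambda>\<phi> x. \<phi> x) \<phi>s xs))"

text \<open>f, a family of coefficients (indexed by exponents (m,k) of z,w) of functionals of the input
  t in V^(tensor k), lies in Vd'[[z^-1,w^-1]][z,w], where Vd' = (V^* )^(tensor k) is the
  (restricted) dual of the input space (Vd' = V^* for k = 1)\<close>
definition in_dser :: "('v \<Rightarrow> 'r::comm_ring_1) set \<Rightarrow> nat \<Rightarrow> (('r,'v) ten \<Rightarrow> int \<times> int \<Rightarrow> 'r) \<Rightarrow> bool" where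
  "in_dser Vd k f \<longleftrightarrow>
     (\<forall>mk. \<exists>\<Psi>\<in>dualten Vd k. \<forall>t\<in>ftens k. f t mk = pair \<Psi> t) \<and>
     (\<exists>M K. \<forall>t\<in>ftens k. \<forall>m n. (m > M \<or> n > K) \<longrightarrow> f t (m, n) = 0)"

text \<open>An operator in two formal variables z, w from V^(tensor k) to V^(tensor n) is given by its
  coefficient of z^m w^l, which is written as a (possibly infinite) sum over j :: int of
  tensors, A t (m,l) j.\<close>
definition pcoeff :: "(('v \<Rightarrow> 'r::comm_ring_1) list \<Rightarrow> 'r) \<Rightarrow> (('r,'v) ten \<Rightarrow> int \<times> int \<Rightarrow> int \<Rightarrow> ('r,'v) ten)
     \<Rightarrow> ('r,'v) ten \<Rightarrow> int \<times> int \<Rightarrow> 'r" where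
  "pcoeff \<Phi> A t mk = (\<Sum>j\<in>fsupp (\<lambda>j. pair \<Phi> (A t mk j)). pair \<Phi> (A t mk j))"

definition op_equiv :: "('v \<Rightarrow> 'r::comm_ring_1) set \<Rightarrow> nat \<Rightarrow> nat
     \<Rightarrow> (('r,'v) ten \<Rightarrow> int \<times> int \<Rightarrow> int \<Rightarrow> ('r,'v) ten)
     \<Rightarrow> (('r,'v) ten \<Rightarrow> int \<times> int \<Rightarrow> int \<Rightarrow> ('r,'v) ten) \<Rightarrow> bool" where
  "op_equiv Vd k n A B \<longleftrightarrow>
     (\<forall>\<Phi>\<in>dualten Vd n.
        (\<forall>t\<in>ftens k. \<forall>mk. finite (fsupp (\<lambda>j. pair \<Phi> (A t mk j)))
                        \<and> finite (fsupp (\<lambda>j. pair \<Phi> (B t mk j)))) \<and>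
        in_dser Vd k (pcoeff \<Phi> A) \<and> in_dser Vd k (pcoeff \<Phi> B) \<and>
        (\<forall>t\<in>ftens k. \<forall>mk. pcoeff \<Phi> A t mk = pcoeff \<Phi> B t mk))"

definition single :: "('r::zero,'v) ten \<Rightarrow> int \<Rightarrow> ('r,'v) ten" where
  "single T j = (if j = 0 then T else tzero)"

text \<open>Data: sc the R-module structure on V; Vd the (restricted) dual V^*, an R-submodule of the
  R-linear functionals on V; cov the covacuum; D k the coefficient of z^k in D(z);
  Y n a (a representative of) the coefficient of z^n in Y(z)a in V (tensor) V;
  S n a b the coefficient of z^n in S(z)(a (tensor) b).\<close>

definition Yx where "Yx Y n t = lin (\<lambda>xs. Y n (xs ! 0)) t"
definition Sx where "Sx S n t = lin (at2 0 (S n)) t"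
definition YL where "YL Y n t = lin (at1 0 (Y n)) t"
definition YR where "YR Y n t = lin (at1 1 (Y n)) t"
definition SL where "SL S n t = lin (at2 0 (S n)) t"
definition SR where "SR S n t = lin (at2 1 (S n)) t"
definition DR where "DR D n t = lin (at1 1 (\<lambda>x. pure [D n x])) t"
definition Dx where "Dx D n t = lin (\<lambda>xs. pure [D n (xs ! 0)]) t"

definition bmv_coalgebra ::
  "('r::comm_ring_1 \<Rightarrow> 'v::ab_group_add \<Rightarrow> 'v) \<Rightarrow> ('v \<Rightarrow> 'r) set \<Rightarrow> ('v \<Rightarrow> 'r)
   \<Rightarrow> (int \<Rightarrow> 'v \<Rightarrow> 'v) \<Rightarrow> (int \<Rightarrow> 'v \<Rightarrow> ('r,'v) ten) \<Rightarrow> (int \<Rightarrow> 'v \<Rightarrow> 'v \<Rightarrow> ('r,'v) ten) \<Rightarrow> bool"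
where
  "bmv_coalgebra sc Vd cov D Y S \<longleftrightarrow>
    \<comment> \<open>V is an R-module, Vd an R-submodule of its linear dual\<close>
    module sc \<and>
    (\<forall>\<phi>\<in>Vd. \<forall>x y c. \<phi> (x + y) = \<phi> x + \<phi> y \<and> \<phi> (sc c x) = c * \<phi> x) \<and>
    (\<lambda>_. 0) \<in> Vd \<and> (\<forall>\<phi>\<in>Vd. \<forall>\<psi>\<in>Vd. (\<lambda>x. \<phi> x + \<psi> x) \<in> Vd) \<and>
    (\<forall>\<phi>\<in>Vd. \<forall>c. (\<lambda>x. c * \<phi> x) \<in> Vd) \<and>
    \<comment> \<open>covacuum\<close>
    cov \<in> Vd \<and>
    \<comment> \<open>translation operator D(z) : V -> V[z,z^-1], R-linear, D(z)D(w) = D(zw)\<close>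
    (\<forall>n x y c. D n (x + y) = D n x + D n y \<and> D n (sc c x) = sc c (D n x)) \<and>
    (\<forall>a. finite {n. D n a \<noteq> 0}) \<and>
    (\<forall>m n a. D m (D n a) = (if m = n then D n a else 0)) \<and>
    \<comment> \<open>vertex coproduct Y(z) : V -> (V (x) V)((z^-1)), R-linear\<close>
    (\<forall>n a. Y n a \<in> ftens 2) \<and>
    (\<forall>n a b c. ten_eq sc 2 (Y n (a + b)) (tadd (Y n a) (Y n b)) \<and>
               ten_eq sc 2 (Y n (sc c a)) (tsmul c (Y n a))) \<and>
    (\<forall>a. \<exists>N. \<forall>n>N. ten_eq sc 2 (Y n a) tzero) \<and>
    \<comment> \<open>braiding S(z) : V (x) V -> (V (x) V)((z^-1)), R-bilinear on pure tensors\<close>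
    (\<forall>n a b. S n a b \<in> ftens 2) \<and>
    (\<forall>n a a' b c. ten_eq sc 2 (S n (a + a') b) (tadd (S n a b) (S n a' b)) \<and>
                  ten_eq sc 2 (S n a (b + a')) (tadd (S n a b) (S n a a')) \<and>
                  ten_eq sc 2 (S n (sc c a) b) (tsmul c (S n a b)) \<and>
                  ten_eq sc 2 (S n a (sc c b)) (tsmul c (S n a b))) \<and>
    (\<forall>a b. \<exists>N. \<forall>n>N. ten_eq sc 2 (S n a b) tzero) \<and>
    \<comment> \<open>unitarity S(z^-1) S(z) = id: coefficient of z^p is sum over n of S_(n-p) S_n\<close>
    (\<forall>t\<in>ftens 2. \<forall>p. has_tsum sc 2 (\<lambda>n. Sx S (n - p) (Sx S n t)) (if p = 0 then t else tzero)) \<and>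
    \<comment> \<open>covacuum axioms\<close>
    (\<forall>n a. contrL sc cov (Y n a) = (if n = 0 then a else 0)) \<and>
    (\<forall>a. finite {n. contrR sc cov (Y n a) \<noteq> 0} \<and>
         (\<Sum>n\<in>{n. contrR sc cov (Y n a) \<noteq> 0}. contrR sc cov (Y n a)) = a) \<and>
    (\<forall>n a b. contrL sc cov (S n a b) = (if n = 0 then sc (cov b) a else 0)) \<and>
    \<comment> \<open>skew symmetry S(z^-1) Y(z) = Y(z^-1) D(z), left side well defined;
        coefficient of z^p: sum_j S_j Y_(p+j) a = sum_k Y_(k-p) D_k a\<close>
    (\<forall>a p. has_tsum sc 2 (\<lambda>j. Sx S j (Y (p + j) a))
              (tsum {k. D k a \<noteq> 0} (\<lambda>k. Y (k - p) (D k a)))) \<and>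
    \<comment> \<open>weak coassociativity (Y(z) (x) id) Y(w) == (id (x) Y(w)) Y(zw)\<close>
    op_equiv Vd 1 3
      (\<lambda>t (m, k). single (YL Y m (Yx Y k t)))
      (\<lambda>t (m, k). single (YR Y (k - m) (Yx Y m t))) \<and>
    \<comment> \<open>Yang-Baxter: (S(z)(x)id)(id(x)S(zw))(S(w)(x)id) == (id(x)S(w))(S(zw)(x)id)(id(x)S(z))\<close>
    op_equiv Vd 3 3
      (\<lambda>t (p, q) i. SL S (p - i) (SR S i (SL S (q - i) t)))
      (\<lambda>t (p, q) i. SR S (q - i) (SL S i (SR S (p - i) t))) \<and>
    \<comment> \<open>(Y(z)(x)id) S(w) == (id(x)S(w))(S(zw)(x)id)(id(x)Y(z))\<close>
    op_equiv Vd 2 3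
      (\<lambda>t (m, k). single (YL Y m (Sx S k t)))
      (\<lambda>t (p, q) i. SR S (q - i) (SL S i (YR Y (p - i) t)))"

end

theory Submission
  imports Defs
begin


definition ev :: "('v \<Rightarrow> 'r::comm_ring_1) list \<Rightarrow> 'v list \<Rightarrow> 'r" where
  "ev \<phi>s xs = prod_list (map2 (\<lambda>\<phi> x. \<phi> x) \<phi>s xs)"

definition pv :: "('v \<Rightarrow> 'r::comm_ring_1) list \<Rightarrow> ('r,'v) ten \<Rightarrow> 'r" where
  "pv \<phi>s t = (\<Sum>xs\<in>fsupp t. t xs * ev \<phi>s xs)"

lemma sum_fsupp_sup:
  fixes t :: "'a \<Rightarrow> 'r::comm_ring_1"
  assumes "finite A" "fsupp t \<subseteq> A"
  shows "(\<Sum>xs\<in>fsupp t. t xs * h xs) = (\<Sum>xs\<in>A. t xs * h xs)"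
  by (rule sum.mono_neutral_left) (use assms in \<open>auto simp: fsupp_def\<close>)

lemma fsupp_pure: "fsupp (pure xs :: ('r::comm_ring_1,'v) ten) = {xs}"
  by (auto simp: fsupp_def pure_def)

lemma sum_pure: "(\<Sum>zs\<in>fsupp (pure xs :: ('r::comm_ring_1,'v) ten). (pure xs :: ('r,'v) ten) zs * h zs) = h xs"
  by (subst fsupp_pure) (simp add: pure_def)

lemma fsupp_lin_sub:
  "fsupp (lin F t) \<subseteq> (\<Union>xs\<in>fsupp t. fsupp (F xs))"
  by (auto simp: fsupp_def lin_def intro!: sum.neutral)

lemma finite_fsupp_lin:
  assumes "finite (fsupp t)" "\<forall>xs\<in>fsupp t. finite (fsupp (F xs))"
  shows "finite (fsupp (lin F t))"
  using fsupp_lin_sub[of F t] assms by (meson finite_UN_I finite_subset)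

lemma sum_lin:
  fixes t :: "('r::comm_ring_1,'v) ten" and F :: "'v list \<Rightarrow> ('r,'w) ten"
  assumes "finite (fsupp t)" "\<forall>xs\<in>fsupp t. finite (fsupp (F xs))"
  shows "(\<Sum>ys\<in>fsupp (lin F t). lin F t ys * h ys) =
         (\<Sum>xs\<in>fsupp t. t xs * (\<Sum>ys\<in>fsupp (F xs). F xs ys * h ys))"
proof -
  define U where "U = (\<Union>xs\<in>fsupp t. fsupp (F xs))"
  have fU: "finite U" using assms unfolding U_def by auto
  have "(\<Sum>ys\<in>fsupp (lin F t). lin F t ys * h ys) = (\<Sum>ys\<in>U. lin F t ys * h ys)"
    using sum_fsupp_sup[OF fU] fsupp_lin_sub[of F t] unfolding U_def by blast
  also have "\<dots> = (\<Sum>ys\<in>U. \<Sum>xs\<in>fsupp t. t xs * (F xs ys * h ys))"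
    by (simp add: lin_def sum_distrib_right mult.assoc)
  also have "\<dots> = (\<Sum>xs\<in>fsupp t. \<Sum>ys\<in>U. t xs * (F xs ys * h ys))"
    by (rule sum.swap)
  also have "\<dots> = (\<Sum>xs\<in>fsupp t. t xs * (\<Sum>ys\<in>fsupp (F xs). F xs ys * h ys))"
  proof (rule sum.cong[OF refl])
    fix xs assume "xs \<in> fsupp t"
    hence "fsupp (F xs) \<subseteq> U" unfolding U_def by auto
    hence "(\<Sum>ys\<in>fsupp (F xs). F xs ys * h ys) = (\<Sum>ys\<in>U. F xs ys * h ys)"
      using sum_fsupp_sup[OF fU] by blast
    thus "(\<Sum>ys\<in>U. t xs * (F xs ys * h ys)) = t xs * (\<Sum>ys\<in>fsupp (F xs). F xs ys * h ys)"
      by (simp add: sum_distrib_left)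
  qed
  finally show ?thesis .
qed

lemma fsupp_tprod_sub:
  "fsupp (tprod s t) \<subseteq> (\<lambda>(u,v). u @ v) ` (fsupp s \<times> fsupp t)"
proof
  fix zs assume "zs \<in> fsupp (tprod s t)"
  then obtain p where "p \<in> fsupp s \<times> fsupp t" "fst p @ snd p = zs"
    unfolding fsupp_def tprod_def by (smt (verit) mem_Collect_eq sum.neutral)
  thus "zs \<in> (\<lambda>(u,v). u @ v) ` (fsupp s \<times> fsupp t)" by (auto intro!: image_eqI[of _ _ p])
qed

lemma sum_tprod:
  fixes s t :: "('r::comm_ring_1,'v) ten"
  assumes "finite (fsupp s)" "finite (fsupp t)"
  shows "(\<Sum>zs\<in>fsupp (tprod s t). tprod s t zs * h zs) =
         (\<Sum>u\<in>fsupp s. \<Sum>v\<in>fsupp t. s u * t v * h (u @ v))"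
proof -
  define U where "U = (\<lambda>(u,v). u @ v) ` (fsupp s \<times> fsupp t)"
  have fU: "finite U" using assms unfolding U_def by auto
  have "(\<Sum>zs\<in>fsupp (tprod s t). tprod s t zs * h zs) = (\<Sum>zs\<in>U. tprod s t zs * h zs)"
    using sum_fsupp_sup[OF fU] fsupp_tprod_sub[of s t] unfolding U_def by blast
  also have "\<dots> = (\<Sum>zs\<in>U. \<Sum>p\<in>fsupp s \<times> fsupp t. (if fst p @ snd p = zs then s (fst p) * t (snd p) * h zs else 0))"
    unfolding tprod_def sum_distrib_right by (intro sum.cong refl) auto
  also have "\<dots> = (\<Sum>p\<in>fsupp s \<times> fsupp t. \<Sum>zs\<in>U. (if fst p @ snd p = zs then s (fst p) * t (snd p) * h zs else 0))"
    by (rule sum.swap)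
  also have "\<dots> = (\<Sum>p\<in>fsupp s \<times> fsupp t. s (fst p) * t (snd p) * h (fst p @ snd p))"
  proof (rule sum.cong[OF refl])
    fix p assume "p \<in> fsupp s \<times> fsupp t"
    hence "fst p @ snd p \<in> U" unfolding U_def by (auto intro!: image_eqI[of _ _ p])
    thus "(\<Sum>zs\<in>U. (if fst p @ snd p = zs then s (fst p) * t (snd p) * h zs else 0)) = s (fst p) * t (snd p) * h (fst p @ snd p)"
      using fU by (simp add: sum.delta)
  qed
  also have "\<dots> = (\<Sum>u\<in>fsupp s. \<Sum>v\<in>fsupp t. s u * t v * h (u @ v))"
    unfolding sum.cartesian_product by (simp add: case_prod_beta)
  finally show ?thesis .
qed

lemma pv_sup: "finite A \<Longrightarrow> fsupp t \<subseteq> A \<Longrightarrow> pv \<phi>s t = (\<Sum>xs\<in>A. t xs * ev \<phi>s xs)"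
  unfolding pv_def by (rule sum_fsupp_sup)

lemma pv_lin:
  assumes "finite (fsupp t)" "\<forall>xs\<in>fsupp t. finite (fsupp (F xs))"
  shows "pv \<phi>s (lin F t) = (\<Sum>xs\<in>fsupp t. t xs * pv \<phi>s (F xs))"
  unfolding pv_def by (rule sum_lin[OF assms])

lemma ev_append: "length a = length u \<Longrightarrow> ev (a @ b) (u @ v) = ev a u * ev b v"
  by (simp add: ev_def)

lemma pv_tprod:
  assumes "finite (fsupp s)" "finite (fsupp t)" "\<forall>u\<in>fsupp s. length u = length a"
  shows "pv (a @ b) (tprod s t) = pv a s * pv b t"
proof -
  have "pv (a @ b) (tprod s t) = (\<Sum>u\<in>fsupp s. \<Sum>v\<in>fsupp t. s u * t v * ev (a @ b) (u @ v))"
    unfolding pv_def by (rule sum_tprod[OF assms(1,2)])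
  also have "\<dots> = (\<Sum>u\<in>fsupp s. \<Sum>v\<in>fsupp t. (s u * ev a u) * (t v * ev b v))"
    using assms(3) by (intro sum.cong refl) (simp add: ev_append mult_ac)
  also have "\<dots> = pv a s * pv b t"
    by (simp add: pv_def sum_product)
  finally show ?thesis .
qed

lemma pv_pure: "pv \<phi>s (pure xs :: ('r::comm_ring_1,'v) ten) = ev \<phi>s xs"
  unfolding pv_def by (rule sum_pure)

lemma pv_tzero: "pv \<phi>s tzero = 0"
  by (simp add: pv_def tzero_def fsupp_def)

lemma ev_Nil[simp]: "ev [] xs = 1" "ev \<phi>s [] = 1"
  by (simp_all add: ev_def)

lemma ev_Cons[simp]: "ev (\<phi> # \<phi>s) (x # xs) = \<phi> x * ev \<phi>s xs"
  by (simp add: ev_def)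

lemma ftens_pure: "(pure xs :: ('r::comm_ring_1,'v) ten) \<in> ftens (length xs)"
  by (simp add: ftens_def fsupp_pure)

lemma ftensD: "t \<in> ftens n \<Longrightarrow> finite (fsupp t)" "t \<in> ftens n \<Longrightarrow> xs \<in> fsupp t \<Longrightarrow> length xs = n"
  by (auto simp: ftens_def)

lemma ftens_tprod: assumes "s \<in> ftens a" "t \<in> ftens b" shows "tprod s t \<in> ftens (a + b)"
proof -
  have sub: "fsupp (tprod s t) \<subseteq> (\<lambda>(u,v). u@v) ` (fsupp s \<times> fsupp t)" by (rule fsupp_tprod_sub)
  have "finite ((\<lambda>(u,v). u@v) ` (fsupp s \<times> fsupp t))" using assms by (auto simp: ftens_def)
  hence f: "finite (fsupp (tprod s t))" using sub finite_subset by blast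
  have "\<forall>xs\<in>fsupp (tprod s t). length xs = a+b" using sub assms by (fastforce simp: ftens_def)
  with f show ?thesis by (simp add: ftens_def)
qed

lemma ftens_lin: "finite (fsupp t) \<Longrightarrow> (\<forall>xs\<in>fsupp t. F xs \<in> ftens n) \<Longrightarrow> lin F t \<in> ftens n"
  using fsupp_lin_sub[of F t] finite_fsupp_lin[of t F] unfolding ftens_def by blast

lemma pv_tprod_Nil: "t \<in> ftens n \<Longrightarrow> pv a (tprod (pure []) t) = pv a t"
  using pv_tprod[of "pure []" t "[]" a] by (simp add: fsupp_pure pv_pure ftensD)

lemma at1_0_2: "at1 0 g [x0, x1] = tprod (tprod (pure []) (g x0)) (pure [x1])"
  by (simp add: at1_def)
lemma at1_1_2: "at1 1 g [x0, x1] = tprod (tprod (pure [x0]) (g x1)) (pure [])"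
  by (simp add: at1_def)
lemma at2_0_3: "at2 0 h [x0, x1, x2] = tprod (tprod (pure []) (h x0 x1)) (pure [x2])"
  by (simp add: at2_def)
lemma at2_0_2: "at2 0 h [x0, x1] = tprod (tprod (pure []) (h x0 x1)) (pure [])"
  by (simp add: at2_def)

lemma pv_at1_0:
  assumes "g x0 \<in> ftens 2"
  shows "pv [a, b, c] (at1 0 g [x0, x1]) = pv [a, b] (g x0) * c x1"
proof -
  have T: "tprod (pure []) (g x0) \<in> ftens 2" using ftens_tprod[OF ftens_pure[of "[]"] assms] by (simp add: numeral_eq_Suc)
  have "pv ([a, b] @ [c]) (at1 0 g [x0, x1]) = pv [a,b] (tprod (pure []) (g x0)) * pv [c] (pure [x1])"
    unfolding at1_0_2 by (rule pv_tprod) (use T in \<open>auto simp: fsupp_pure dest: ftensD\<close>)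
  thus ?thesis using pv_tprod_Nil[OF assms] by (simp add: pv_pure)
qed

lemma pv_tprod_Nil_right: "t \<in> ftens n \<Longrightarrow> length a = n \<Longrightarrow> pv a (tprod t (pure [])) = pv a t"
  using pv_tprod[of t "pure []" a "[]"] by (simp add: fsupp_pure pv_pure ftensD)

lemma pv_at1_1:
  assumes "g x1 \<in> ftens 2"
  shows "pv [a, b, c] (at1 1 g [x0, x1]) = a x0 * pv [b, c] (g x1)"
proof -
  have T: "tprod (pure [x0]) (g x1) \<in> ftens 3" using ftens_tprod[OF ftens_pure[of "[x0]"] assms] by (simp add: numeral_eq_Suc)
  have "pv ([a] @ [b, c]) (tprod (pure [x0]) (g x1)) = pv [a] (pure [x0]) * pv [b,c] (g x1)"
    by (rule pv_tprod) (use assms in \<open>auto simp: fsupp_pure dest: ftensD\<close>)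
  moreover have "pv [a,b,c] (tprod (tprod (pure [x0]) (g x1)) (pure [])) = pv [a,b,c] (tprod (pure [x0]) (g x1))"
    by (rule pv_tprod_Nil_right[OF T]) simp
  ultimately show ?thesis unfolding at1_1_2 by (simp add: pv_pure)
qed

lemma pv_at2_0_3:
  assumes "h x0 x1 \<in> ftens 2"
  shows "pv [a, b, c] (at2 0 h [x0, x1, x2]) = pv [a, b] (h x0 x1) * c x2"
proof -
  have T: "tprod (pure []) (h x0 x1) \<in> ftens 2" using ftens_tprod[OF ftens_pure[of "[]"] assms] by (simp add: numeral_eq_Suc)
  have "pv ([a, b] @ [c]) (at2 0 h [x0, x1, x2]) = pv [a,b] (tprod (pure []) (h x0 x1)) * pv [c] (pure [x2])"
    unfolding at2_0_3 by (rule pv_tprod) (use T in \<open>auto simp: fsupp_pure dest: ftensD\<close>)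
  thus ?thesis using pv_tprod_Nil[OF assms] by (simp add: pv_pure)
qed

lemma pv_at2_0_2:
  assumes "h x0 x1 \<in> ftens 2"
  shows "pv [a, b] (at2 0 h [x0, x1]) = pv [a, b] (h x0 x1)"
proof -
  have T: "tprod (pure []) (h x0 x1) \<in> ftens 2" using ftens_tprod[OF ftens_pure[of "[]"] assms] by (simp add: numeral_eq_Suc)
  have "pv [a,b] (tprod (tprod (pure []) (h x0 x1)) (pure [])) = pv [a,b] (tprod (pure []) (h x0 x1))"
    by (rule pv_tprod_Nil_right[OF T]) simp
  thus ?thesis unfolding at2_0_2 pv_tprod_Nil[OF assms] .
qed

lemma ftens_at1_0: "g x0 \<in> ftens 2 \<Longrightarrow> at1 0 g [x0, x1] \<in> ftens 3"
  unfolding at1_0_2 using ftens_tprod[OF ftens_tprod[OF ftens_pure[of "[]"]] ftens_pure[of "[x1]"]]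
  by (simp add: numeral_eq_Suc)
lemma ftens_at1_1: "g x1 \<in> ftens 2 \<Longrightarrow> at1 1 g [x0, x1] \<in> ftens 3"
  unfolding at1_1_2 using ftens_tprod[OF ftens_tprod[OF ftens_pure[of "[x0]"]] ftens_pure[of "[]"]]
  by (simp add: numeral_eq_Suc)
lemma ftens_at2_0_3: "h x0 x1 \<in> ftens 2 \<Longrightarrow> at2 0 h [x0, x1, x2] \<in> ftens 3"
  unfolding at2_0_3 using ftens_tprod[OF ftens_tprod[OF ftens_pure[of "[]"]] ftens_pure[of "[x2]"]]
  by (simp add: numeral_eq_Suc)
lemma ftens_at2_0_2: "h x0 x1 \<in> ftens 2 \<Longrightarrow> at2 0 h [x0, x1] \<in> ftens 2"
  unfolding at2_0_2 using ftens_tprod[OF ftens_tprod[OF ftens_pure[of "[]"]] ftens_pure[of "[]"]]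
  by (simp add: numeral_eq_Suc)

lemma len2: "length xs = 2 \<Longrightarrow> xs = [xs!0, xs!1]"
  by (cases xs; cases "tl xs") auto
lemma len3: "length xs = 3 \<Longrightarrow> xs = [xs!0, xs!1, xs!2]"
  by (cases xs; cases "tl xs"; cases "tl (tl xs)") auto
lemma len1: "length xs = 1 \<Longrightarrow> xs = [xs!0]"
  by (cases xs) auto

lemma pv_diff:
  assumes "finite (fsupp s)" "finite (fsupp t)"
  shows "pv \<phi>s (\<lambda>zs. s zs - t zs) = pv \<phi>s s - pv \<phi>s t"
proof -
  let ?A = "fsupp s \<union> fsupp t"
  have f: "finite ?A" using assms by simp
  have "pv \<phi>s (\<lambda>zs. s zs - t zs) = (\<Sum>xs\<in>?A. (s xs - t xs) * ev \<phi>s xs)"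
    by (rule pv_sup[OF f]) (auto simp: fsupp_def)
  also have "\<dots> = (\<Sum>xs\<in>?A. s xs * ev \<phi>s xs) - (\<Sum>xs\<in>?A. t xs * ev \<phi>s xs)"
    by (simp add: left_diff_distrib sum_subtractf)
  also have "\<dots> = pv \<phi>s s - pv \<phi>s t"
    using pv_sup[OF f, of s] pv_sup[OF f, of t] by auto
  finally show ?thesis .
qed

lemma pv_smul:
  assumes "finite (fsupp t)"
  shows "pv \<phi>s (\<lambda>zs. c * t zs) = c * pv \<phi>s t"
proof -
  have "pv \<phi>s (\<lambda>zs. c * t zs) = (\<Sum>xs\<in>fsupp t. (c * t xs) * ev \<phi>s xs)"
    by (rule pv_sup[OF assms]) (auto simp: fsupp_def)
  thus ?thesis by (simp add: pv_def sum_distrib_left mult.assoc)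
qed

lemma pv_sum:
  assumes "finite G" "\<forall>g\<in>G. finite (fsupp (f g))"
  shows "pv \<phi>s (\<lambda>zs. \<Sum>g\<in>G. f g zs) = (\<Sum>g\<in>G. pv \<phi>s (f g))"
proof -
  let ?A = "\<Union>g\<in>G. fsupp (f g)"
  have fA: "finite ?A" using assms by auto
  have "pv \<phi>s (\<lambda>zs. \<Sum>g\<in>G. f g zs) = (\<Sum>xs\<in>?A. (\<Sum>g\<in>G. f g xs) * ev \<phi>s xs)"
    by (rule pv_sup[OF fA]) (auto simp: fsupp_def intro: ccontr sum.neutral)
  also have "\<dots> = (\<Sum>g\<in>G. \<Sum>xs\<in>?A. f g xs * ev \<phi>s xs)"
    by (simp add: sum_distrib_right sum.swap[of _ ?A])
  also have "\<dots> = (\<Sum>g\<in>G. pv \<phi>s (f g))"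
    by (intro sum.cong refl pv_sup[OF fA, symmetric]) auto
  finally show ?thesis .
qed

lemma pv_tsum:
  assumes "finite G" "\<forall>g\<in>G. finite (fsupp (f g))"
  shows "pv \<phi>s (tsum G f) = (\<Sum>g\<in>G. pv \<phi>s (f g))"
  unfolding tsum_def by (rule pv_sum[OF assms])

definition lfn :: "('r::comm_ring_1 \<Rightarrow> 'v::ab_group_add \<Rightarrow> 'v) \<Rightarrow> ('v \<Rightarrow> 'r) \<Rightarrow> bool" where
  "lfn sc \<phi> \<longleftrightarrow> (\<forall>x y c. \<phi> (x + y) = \<phi> x + \<phi> y \<and> \<phi> (sc c x) = c * \<phi> x)"

lemma lfn_add: "lfn sc \<phi> \<Longrightarrow> \<phi> (x + y) = \<phi> x + \<phi> y" by (simp add: lfn_def)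
lemma lfn_sc: "lfn sc \<phi> \<Longrightarrow> \<phi> (sc c x) = c * \<phi> x" by (simp add: lfn_def)
lemma lfn_0: "lfn sc \<phi> \<Longrightarrow> \<phi> 0 = 0"
  using lfn_add[of sc \<phi> 0 0] by simp
lemma lfn_sum: "lfn sc \<phi> \<Longrightarrow> \<phi> (\<Sum>i\<in>I. f i) = (\<Sum>i\<in>I. \<phi> (f i))"
  by (induction I rule: infinite_finite_induct) (auto simp: lfn_0 lfn_add)

lemma ev_mid: "length A = length xs \<Longrightarrow> ev (A @ [\<phi>] @ B) (xs @ [v] @ ys) = ev A xs * \<phi> v * ev B ys"
  by (simp add: ev_append)

lemma ev_mid': "length A = length xs \<Longrightarrow> ev (A @ \<phi> # B) (xs @ v # ys) = ev A xs * \<phi> v * ev B ys"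
  using ev_mid[of A xs \<phi> B v ys] by simp

lemma finite_fsupp_smul: "finite (fsupp t) \<Longrightarrow> finite (fsupp (\<lambda>zs. c * (t :: ('r::comm_ring_1,'v) ten) zs))"
  by (rule finite_subset[of _ "fsupp t"]) (auto simp: fsupp_def)

lemma finite_fsupp_pure: "finite (fsupp (pure xs :: ('r::comm_ring_1,'v) ten))"
  by (simp add: fsupp_pure)

lemma gen_props:
  fixes sc :: "'r::comm_ring_1 \<Rightarrow> 'v::ab_group_add \<Rightarrow> 'v"
  assumes g: "g \<in> ten_gens sc n" and len: "length \<phi>s = n" and lf: "\<forall>\<phi>\<in>set \<phi>s. lfn sc \<phi>"
  shows "finite (fsupp g) \<and> pv \<phi>s g = 0"
proof -
  have split: "\<phi>s = take (length xs) \<phi>s @ [\<phi>s ! length xs] @ drop (Suc (length xs)) \<phi>s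
        \<and> lfn sc (\<phi>s ! length xs) \<and> length (take (length xs) \<phi>s) = length xs"
    if "Suc (length xs + length ys) = n" for xs ys :: "'v list"
  proof -
    have lt: "length xs < length \<phi>s" using that len by simp
    thus ?thesis using id_take_nth_drop[OF lt] lf nth_mem[OF lt] by auto
  qed
  from g consider
    (a) xs x y ys where "g = (\<lambda>zs. pure (xs @ [x + y] @ ys) zs - pure (xs @ [x] @ ys) zs - pure (xs @ [y] @ ys) zs)"
         "Suc (length xs + length ys) = n"
  | (b) xs c x ys where "g = (\<lambda>zs. pure (xs @ [sc c x] @ ys) zs - c * pure (xs @ [x] @ ys) zs)"
         "Suc (length xs + length ys) = n"
    unfolding ten_gens_def by blast
  thus ?thesis
  proof cases
    case (a xs x y ys)
    let ?A = "take (length xs) \<phi>s" and ?B = "drop (Suc (length xs)) \<phi>s" and ?f = "\<phi>s ! length xs"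
    have s: "\<phi>s = ?A @ [?f] @ ?B" "lfn sc ?f" "length ?A = length xs" using split[OF a(2)] by auto
    have f1: "finite (fsupp (\<lambda>zs. (pure (xs @ [x + y] @ ys) zs - pure (xs @ [x] @ ys) zs :: 'r)))"
      by (rule finite_subset[of _ "{xs @ [x + y] @ ys, xs @ [x] @ ys}"]) (auto simp: fsupp_def pure_def)
    have "finite (fsupp g)"
      unfolding a(1) by (rule finite_subset[of _ "{xs @ [x + y] @ ys, xs @ [x] @ ys, xs @ [y] @ ys}"]) (auto simp: fsupp_def pure_def)
    moreover have "pv \<phi>s g = ev \<phi>s (xs @ [x + y] @ ys) - ev \<phi>s (xs @ [x] @ ys) - ev \<phi>s (xs @ [y] @ ys)"
      unfolding a(1) pv_diff[OF f1 finite_fsupp_pure] pv_diff[OF finite_fsupp_pure finite_fsupp_pure] pv_pure ..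
    moreover have "\<dots> = 0"
      by (subst (1 2 3) s(1)) (simp add: ev_mid'[OF s(3)] lfn_add[OF s(2)] algebra_simps)
    ultimately show ?thesis by simp
  next
    case (b xs c x ys)
    let ?A = "take (length xs) \<phi>s" and ?B = "drop (Suc (length xs)) \<phi>s" and ?f = "\<phi>s ! length xs"
    have s: "\<phi>s = ?A @ [?f] @ ?B" "lfn sc ?f" "length ?A = length xs" using split[OF b(2)] by auto
    have f1: "finite (fsupp (\<lambda>zs. c * (pure (xs @ [x] @ ys) zs :: 'r)))"
      by (rule finite_subset[of _ "{xs @ [x] @ ys}"]) (auto simp: fsupp_def pure_def)
    have "finite (fsupp g)"
      unfolding b(1) by (rule finite_subset[of _ "{xs @ [sc c x] @ ys, xs @ [x] @ ys}"]) (auto simp: fsupp_def pure_def)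
    moreover have "pv \<phi>s g = ev \<phi>s (xs @ [sc c x] @ ys) - c * ev \<phi>s (xs @ [x] @ ys)"
      unfolding b(1) pv_diff[OF finite_fsupp_pure f1] pv_smul[OF finite_fsupp_pure] pv_pure ..
    moreover have "\<dots> = 0"
      by (subst (1 2) s(1)) (simp add: ev_mid'[OF s(3)] lfn_sc[OF s(2)] algebra_simps)
    ultimately show ?thesis by simp
  qed
qed

lemma pv_ten_eq:
  fixes sc :: "'r::comm_ring_1 \<Rightarrow> 'v::ab_group_add \<Rightarrow> 'v"
  assumes e: "ten_eq sc n s t" and len: "length \<phi>s = n" and lf: "\<forall>\<phi>\<in>set \<phi>s. lfn sc \<phi>"
  shows "pv \<phi>s s = pv \<phi>s t"
proof -
  from e have fs: "finite (fsupp s)" "finite (fsupp t)" and r: "(\<lambda>zs. s zs - t zs) \<in> ten_rel sc n"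
    by (auto simp: ten_eq_def ftens_def)
  from r obtain G c where G: "finite G" "G \<subseteq> ten_gens sc n" "(\<lambda>zs. s zs - t zs) = (\<lambda>zs. \<Sum>g\<in>G. c g * g zs)"
    unfolding ten_rel_def by blast
  have gp: "finite (fsupp g) \<and> pv \<phi>s g = 0" if "g \<in> G" for g
    using gen_props[OF _ len lf] G(2) that by blast
  have "pv \<phi>s s - pv \<phi>s t = pv \<phi>s (\<lambda>zs. \<Sum>g\<in>G. c g * g zs)"
    using pv_diff[OF fs] G(3) by simp
  also have "\<dots> = (\<Sum>g\<in>G. pv \<phi>s (\<lambda>zs. c g * g zs))"
    by (rule pv_sum[OF G(1)]) (use gp finite_fsupp_smul in blast)
  also have "\<dots> = 0" using gp pv_smul by (simp add: pv_smul)
  finally show ?thesis by simp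
qed

lemma pair_pv: "pair \<Phi> X = (\<Sum>\<phi>s\<in>fsupp \<Phi>. \<Phi> \<phi>s * pv \<phi>s X)"
  by (simp add: pair_def pv_def ev_def sum_distrib_left mult.assoc)

lemma pair_pure: "pair (pure \<phi>s :: ('v \<Rightarrow> 'r::comm_ring_1) list \<Rightarrow> 'r) X = pv \<phi>s X"
  by (simp add: pair_pv fsupp_pure) (simp add: pure_def)

lemma pair_tzero: "pair \<Phi> tzero = 0"
  by (simp add: pair_pv pv_tzero)

lemma pure_dualten: "set \<phi>s \<subseteq> Vd \<Longrightarrow> length \<phi>s = n \<Longrightarrow> (pure \<phi>s :: ('v \<Rightarrow> 'r::comm_ring_1) list \<Rightarrow> 'r) \<in> dualten Vd n"
  by (simp add: dualten_def fsupp_pure)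

lemma dualtenD: "\<Phi> \<in> dualten Vd n \<Longrightarrow> finite (fsupp \<Phi>)"
  "\<Phi> \<in> dualten Vd n \<Longrightarrow> \<phi>s \<in> fsupp \<Phi> \<Longrightarrow> length \<phi>s = n"
  "\<Phi> \<in> dualten Vd n \<Longrightarrow> \<phi>s \<in> fsupp \<Phi> \<Longrightarrow> set \<phi>s \<subseteq> Vd"
  by (auto simp: dualten_def)

definition appd :: "(('v \<Rightarrow> 'r::comm_ring_1) list \<Rightarrow> 'r) \<Rightarrow> ('v \<Rightarrow> 'r) \<Rightarrow> ('v \<Rightarrow> 'r) list \<Rightarrow> 'r" where
  "appd \<Phi> c = (\<lambda>\<phi>s. if \<phi>s \<noteq> [] \<and> last \<phi>s = c then \<Phi> (butlast \<phi>s) else 0)"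

lemma fsupp_appd: "fsupp (appd \<Phi> c) = (\<lambda>\<phi>s. \<phi>s @ [c]) ` fsupp \<Phi>"
proof
  show "fsupp (appd \<Phi> c) \<subseteq> (\<lambda>\<phi>s. \<phi>s @ [c]) ` fsupp \<Phi>"
  proof
    fix \<psi>s assume "\<psi>s \<in> fsupp (appd \<Phi> c)"
    hence h: "\<psi>s \<noteq> []" "last \<psi>s = c" "\<Phi> (butlast \<psi>s) \<noteq> 0"
      by (auto simp: fsupp_def appd_def split: if_splits)
    hence "\<psi>s = butlast \<psi>s @ [c]" by (metis append_butlast_last_id)
    with h show "\<psi>s \<in> (\<lambda>\<phi>s. \<phi>s @ [c]) ` fsupp \<Phi>" by (auto simp: fsupp_def)
  qed
  show "(\<lambda>\<phi>s. \<phi>s @ [c]) ` fsupp \<Phi> \<subseteq> fsupp (appd \<Phi> c)"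
    by (auto simp: fsupp_def appd_def)
qed

lemma pair_appd: "pair (appd \<Phi> c) X = (\<Sum>\<phi>s\<in>fsupp \<Phi>. \<Phi> \<phi>s * pv (\<phi>s @ [c]) X)"
proof -
  have "pair (appd \<Phi> c) X = (\<Sum>\<psi>s\<in>(\<lambda>\<phi>s. \<phi>s @ [c]) ` fsupp \<Phi>. appd \<Phi> c \<psi>s * pv \<psi>s X)"
    by (simp add: pair_pv fsupp_appd)
  also have "\<dots> = (\<Sum>\<phi>s\<in>fsupp \<Phi>. appd \<Phi> c (\<phi>s @ [c]) * pv (\<phi>s @ [c]) X)"
    by (rule sum.reindex[unfolded comp_def]) (auto simp: inj_on_def)
  also have "\<dots> = (\<Sum>\<phi>s\<in>fsupp \<Phi>. \<Phi> \<phi>s * pv (\<phi>s @ [c]) X)"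
    by (simp add: appd_def)
  finally show ?thesis .
qed

lemma appd_dualten: "\<Phi> \<in> dualten Vd n \<Longrightarrow> c \<in> Vd \<Longrightarrow> appd \<Phi> c \<in> dualten Vd (Suc n)"
  by (auto simp: dualten_def fsupp_appd)

lemma pcoeff_single:
  assumes "\<And>j. A t mk j = single T j"
  shows "pcoeff \<Phi> A t mk = pair \<Phi> T" "finite (fsupp (\<lambda>j. pair \<Phi> (A t mk j)))"
proof -
  have e: "(\<lambda>j. pair \<Phi> (A t mk j)) = (\<lambda>j. if j = 0 then pair \<Phi> T else 0)"
    by (auto simp: assms single_def pair_tzero)
  show "pcoeff \<Phi> A t mk = pair \<Phi> T"
    unfolding pcoeff_def e by (cases "pair \<Phi> T = 0") (auto simp: fsupp_def)
  show "finite (fsupp (\<lambda>j. pair \<Phi> (A t mk j)))"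
    unfolding e by (rule finite_subset[of _ "{0}"]) (auto simp: fsupp_def)
qed

lemma in_dser_cong:
  assumes "\<And>t mk. t \<in> ftens k \<Longrightarrow> f t mk = g t mk"
  shows "in_dser Vd k f = in_dser Vd k g"
  unfolding in_dser_def using assms by (metis (no_types, lifting))

lemma lin_pure: "lin F (pure xs :: ('r::comm_ring_1,'v) ten) = F xs"
  by (rule ext) (simp add: lin_def fsupp_pure, simp add: pure_def)



lemma pv_at1_1_pure:
  "pv [a, b] (at1 1 (\<lambda>x. pure [d x] :: ('r::comm_ring_1,'v) ten) [x0, x1]) = a x0 * b (d x1)"
proof -
  have e: "at1 1 (\<lambda>x. pure [d x] :: ('r,'v) ten) [x0, x1] = tprod (tprod (pure [x0]) (pure [d x1])) (pure [])"
    by (simp add: at1_def)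
  have T: "tprod (pure [x0]) (pure [d x1] :: ('r,'v) ten) \<in> ftens 2"
    using ftens_tprod[OF ftens_pure[of "[x0]"] ftens_pure[of "[d x1]"]] by (simp add: numeral_eq_Suc)
  have "pv ([a] @ [b]) (tprod (pure [x0]) (pure [d x1] :: ('r,'v) ten)) = pv [a] (pure [x0] :: ('r,'v) ten) * pv [b] (pure [d x1] :: ('r,'v) ten)"
    by (rule pv_tprod) (auto simp: fsupp_pure)
  moreover have "pv [a,b] (tprod (tprod (pure [x0]) (pure [d x1])) (pure [])) = pv [a,b] (tprod (pure [x0]) (pure [d x1] :: ('r,'v) ten))"
    by (rule pv_tprod_Nil_right[OF T]) simp
  ultimately show ?thesis unfolding e by (simp add: pv_pure)
qed

lemma ftens_at1_1_pure: "at1 1 (\<lambda>x. pure [d x] :: ('r::comm_ring_1,'v) ten) [x0, x1] \<in> ftens 2"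
proof -
  have e: "at1 1 (\<lambda>x. pure [d x] :: ('r,'v) ten) [x0, x1] = tprod (tprod (pure [x0]) (pure [d x1])) (pure [])"
    by (simp add: at1_def)
  show ?thesis unfolding e
    using ftens_tprod[OF ftens_tprod[OF ftens_pure[of "[x0]"] ftens_pure[of "[d x1]"]] ftens_pure[of "[]"]]
    by (simp add: numeral_eq_Suc)
qed

lemma lin2_eq:
  assumes "T \<in> ftens 2"
  shows "lin G T = lin (\<lambda>xs. G [xs!0, xs!1]) T"
  unfolding lin_def
proof (intro ext sum.cong refl)
  fix zs xs assume "xs \<in> fsupp T"
  then obtain x0 x1 where "xs = [x0, x1]" using assms len2 ftensD(2) by metis
  thus "T xs * G xs zs = T xs * G [xs!0, xs!1] zs" by simp
qed

lemma lin3_eq: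
  assumes "T \<in> ftens 3"
  shows "lin G T = lin (\<lambda>xs. G [xs!0, xs!1, xs!2]) T"
  unfolding lin_def
proof (intro ext sum.cong refl)
  fix zs xs assume "xs \<in> fsupp T"
  then obtain x0 x1 x2 where "xs = [x0, x1, x2]" using assms len3 ftensD(2) by metis
  thus "T xs * G xs zs = T xs * G [xs!0, xs!1, xs!2] zs" by simp
qed

lemma lin1_eq:
  assumes "T \<in> ftens 1"
  shows "lin G T = lin (\<lambda>xs. G [xs!0]) T"
  unfolding lin_def
proof (intro ext sum.cong refl)
  fix zs xs assume "xs \<in> fsupp T"
  then obtain x0 where "xs = [x0]" using assms len1 ftensD(2) by metis
  thus "T xs * G xs zs = T xs * G [xs!0] zs" by simp
qed

lemma pv_lin_ft:
  assumes "T \<in> ftens k" "\<And>xs. F xs \<in> ftens n"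
  shows "pv \<phi>s (lin F T) = (\<Sum>xs\<in>fsupp T. T xs * pv \<phi>s (F xs))"
  by (rule pv_lin) (use assms in \<open>auto dest: ftensD\<close>)

lemma ftens_lin_ft:
  assumes "T \<in> ftens k" "\<And>xs. F xs \<in> ftens n"
  shows "lin F T \<in> ftens n"
  by (rule ftens_lin) (use assms in \<open>auto dest: ftensD\<close>)

context
  fixes Y :: "int \<Rightarrow> 'v \<Rightarrow> ('r::comm_ring_1,'v) ten" and S :: "int \<Rightarrow> 'v \<Rightarrow> 'v \<Rightarrow> ('r,'v) ten"
    and D :: "int \<Rightarrow> 'v \<Rightarrow> 'v"
  assumes hY: "\<And>n a. Y n a \<in> ftens 2" and hS: "\<And>n a b. S n a b \<in> ftens 2"
begin

lemma ftens_Yx: "finite (fsupp t) \<Longrightarrow> Yx Y m t \<in> ftens 2"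
  unfolding Yx_def by (rule ftens_lin) (auto simp: hY)

lemma pv_Yx: "finite (fsupp t) \<Longrightarrow> pv \<phi>s (Yx Y m t) = (\<Sum>xs\<in>fsupp t. t xs * pv \<phi>s (Y m (xs!0)))"
  unfolding Yx_def by (rule pv_lin) (auto intro: ftensD[OF hY])

lemma Yx_pure: "Yx Y m (pure [a]) = Y m a"
  by (simp add: Yx_def lin_pure)

lemma ftens_YL: "T \<in> ftens 2 \<Longrightarrow> YL Y m T \<in> ftens 3"
  unfolding YL_def
proof (rule ftens_lin)
  assume T: "T \<in> ftens 2"
  show "finite (fsupp T)" using T by (rule ftensD)
  show "\<forall>xs\<in>fsupp T. at1 0 (Y m) xs \<in> ftens 3"
  proof
    fix xs assume "xs \<in> fsupp T"
    then obtain x0 x1 where xs: "xs = [x0, x1]" using T len2 ftensD(2) by metis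
    show "at1 0 (Y m) xs \<in> ftens 3" unfolding xs by (rule ftens_at1_0[OF hY])
  qed
qed

lemma pv_YL:
  assumes "T \<in> ftens 2"
  shows "pv [a, b, c] (YL Y m T) = (\<Sum>xs\<in>fsupp T. T xs * (pv [a, b] (Y m (xs!0)) * c (xs!1)))"
proof -
  have "pv [a, b, c] (YL Y m T) = (\<Sum>xs\<in>fsupp T. T xs * pv [a, b, c] (at1 0 (Y m) xs))"
    unfolding YL_def
  proof (rule pv_lin)
    show "finite (fsupp T)" using assms by (rule ftensD)
    show "\<forall>xs\<in>fsupp T. finite (fsupp (at1 0 (Y m) xs))"
    proof
      fix xs assume "xs \<in> fsupp T"
      then obtain x0 x1 where xs: "xs = [x0, x1]" using assms len2 ftensD(2) by metis
      show "finite (fsupp (at1 0 (Y m) xs))" unfolding xs by (rule ftensD(1)[OF ftens_at1_0[OF hY]])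
    qed
  qed
  also have "\<dots> = (\<Sum>xs\<in>fsupp T. T xs * (pv [a, b] (Y m (xs!0)) * c (xs!1)))"
  proof (rule sum.cong[OF refl])
    fix xs assume "xs \<in> fsupp T"
    then obtain x0 x1 where xs: "xs = [x0, x1]" using assms len2 ftensD(2) by metis
    show "T xs * pv [a, b, c] (at1 0 (Y m) xs) = T xs * (pv [a, b] (Y m (xs!0)) * c (xs!1))"
      unfolding xs by (simp add: pv_at1_0[OF hY])
  qed
  finally show ?thesis .
qed

lemma ftens_YR: "T \<in> ftens 2 \<Longrightarrow> YR Y m T \<in> ftens 3"
  unfolding YR_def by (subst lin2_eq[of _ "at1 1 (Y m)"], assumption, rule ftens_lin_ft, assumption, rule ftens_at1_1[OF hY])

lemma pv_YR:
  assumes "T \<in> ftens 2"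
  shows "pv [a, b, c] (YR Y m T) = (\<Sum>xs\<in>fsupp T. T xs * (a (xs!0) * pv [b, c] (Y m (xs!1))))"
  unfolding YR_def lin2_eq[OF assms, of "at1 1 (Y m)"] pv_lin_ft[OF assms ftens_at1_1[OF hY]] pv_at1_1[OF hY] ..

lemma ftens_Sx: "T \<in> ftens 2 \<Longrightarrow> Sx S j T \<in> ftens 2"
  unfolding Sx_def by (subst lin2_eq[of _ "at2 0 (S j)"], assumption, rule ftens_lin_ft, assumption, rule ftens_at2_0_2[OF hS])

lemma pv_Sx:
  assumes "T \<in> ftens 2"
  shows "pv [a, b] (Sx S j T) = (\<Sum>xs\<in>fsupp T. T xs * pv [a, b] (S j (xs!0) (xs!1)))"
  unfolding Sx_def lin2_eq[OF assms, of "at2 0 (S j)"] pv_lin_ft[OF assms ftens_at2_0_2[OF hS]] pv_at2_0_2[OF hS] ..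

lemma Sx_pure: "pv [a, b] (Sx S j (pure [x, y])) = pv [a, b] (S j x y)"
proof -
  have P: "(pure [x, y] :: ('r,'v) ten) \<in> ftens 2" using ftens_pure[of "[x,y]"] by (simp add: numeral_eq_Suc)
  show ?thesis unfolding pv_Sx[OF P] by (simp add: fsupp_pure) (simp add: pure_def)
qed

lemma ftens_SL: "T \<in> ftens 3 \<Longrightarrow> SL S j T \<in> ftens 3"
  unfolding SL_def by (subst lin3_eq[of _ "at2 0 (S j)"], assumption, rule ftens_lin_ft, assumption, rule ftens_at2_0_3[OF hS])

lemma pv_SL:
  assumes "T \<in> ftens 3"
  shows "pv [a, b, c] (SL S j T) = (\<Sum>xs\<in>fsupp T. T xs * (pv [a, b] (S j (xs!0) (xs!1)) * c (xs!2)))"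
  unfolding SL_def lin3_eq[OF assms, of "at2 0 (S j)"] pv_lin_ft[OF assms ftens_at2_0_3[OF hS]] pv_at2_0_3[OF hS] ..

lemma ftens_DR: "T \<in> ftens 2 \<Longrightarrow> DR D n T \<in> ftens 2"
  unfolding DR_def by (subst lin2_eq[of _ "at1 1 (\<lambda>x. pure [D n x])"], assumption, rule ftens_lin_ft, assumption, rule ftens_at1_1_pure)

lemma pv_DR:
  assumes "T \<in> ftens 2"
  shows "pv [a, b] (DR D n T) = (\<Sum>xs\<in>fsupp T. T xs * (a (xs!0) * b (D n (xs!1))))"
  unfolding DR_def lin2_eq[OF assms, of "at1 1 (\<lambda>x. pure [D n x])"] pv_lin_ft[OF assms ftens_at1_1_pure] pv_at1_1_pure ..

lemma pv_Yx_Dx: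
  assumes "finite (fsupp t)"
  shows "pv \<phi>s (Yx Y m (Dx D k t)) = (\<Sum>xs\<in>fsupp t. t xs * pv \<phi>s (Y m (D k (xs!0))))"
proof -
  have fD: "\<forall>xs\<in>fsupp t. finite (fsupp (pure [D k (xs!0)] :: ('r,'v) ten))" by (simp add: fsupp_pure)
  have "pv \<phi>s (Yx Y m (Dx D k t)) = (\<Sum>ys\<in>fsupp (Dx D k t). Dx D k t ys * pv \<phi>s (Y m (ys!0)))"
    by (rule pv_Yx) (unfold Dx_def, rule finite_fsupp_lin[OF assms fD])
  also have "\<dots> = (\<Sum>xs\<in>fsupp t. t xs * (\<Sum>ys\<in>fsupp (pure [D k (xs!0)] :: ('r,'v) ten). pure [D k (xs!0)] ys * pv \<phi>s (Y m (ys!0))))"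
    unfolding Dx_def by (rule sum_lin[OF assms fD])
  also have "\<dots> = (\<Sum>xs\<in>fsupp t. t xs * pv \<phi>s (Y m (D k (xs!0))))"
    by (simp only: sum_pure) simp
  finally show ?thesis .
qed

end



context
  fixes sc :: "'r::comm_ring_1 \<Rightarrow> 'v::ab_group_add \<Rightarrow> 'v" and Vd :: "('v \<Rightarrow> 'r) set"
    and cov :: "'v \<Rightarrow> 'r" and D :: "int \<Rightarrow> 'v \<Rightarrow> 'v" and Y :: "int \<Rightarrow> 'v \<Rightarrow> ('r,'v) ten"
    and S :: "int \<Rightarrow> 'v \<Rightarrow> 'v \<Rightarrow> ('r,'v) ten"
  assumes bmv: "bmv_coalgebra sc Vd cov D Y S"
begin

lemma Vd_lfn: "\<phi> \<in> Vd \<Longrightarrow> lfn sc \<phi>"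
  using bmv unfolding bmv_coalgebra_def lfn_def by simp
lemma cov_Vd: "cov \<in> Vd"
  using bmv unfolding bmv_coalgebra_def by simp
lemma hY: "Y n a \<in> ftens 2"
  using bmv unfolding bmv_coalgebra_def by simp
lemma hS: "S n a b \<in> ftens 2"
  using bmv unfolding bmv_coalgebra_def by simp
lemma contrL_Y: "contrL sc cov (Y n a) = (if n = 0 then a else 0)"
  using bmv unfolding bmv_coalgebra_def by simp
lemma contrL_S: "contrL sc cov (S n a b) = (if n = 0 then sc (cov b) a else 0)"
  using bmv unfolding bmv_coalgebra_def by simp
lemma skew: "has_tsum sc 2 (\<lambda>j. Sx S j (Y (p + j) a)) (tsum {k. D k a \<noteq> 0} (\<lambda>k. Y (k - p) (D k a)))"
  using bmv unfolding bmv_coalgebra_def by simp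
lemma Dfin: "finite {k. D k a \<noteq> 0}"
  using bmv unfolding bmv_coalgebra_def by simp
lemma coassoc: "op_equiv Vd 1 3
      (\<lambda>t (m, k). single (YL Y m (Yx Y k t)))
      (\<lambda>t (m, k). single (YR Y (k - m) (Yx Y m t)))"
  using bmv unfolding bmv_coalgebra_def by simp
lemma YSax: "op_equiv Vd 2 3
      (\<lambda>t (m, k). single (YL Y m (Sx S k t)))
      (\<lambda>t (p, q) i. SR S (q - i) (SL S i (YR Y (p - i) t)))"
  using bmv unfolding bmv_coalgebra_def by simp

lemma lfs_Vd: "set \<phi>s \<subseteq> Vd \<Longrightarrow> \<forall>\<phi>\<in>set \<phi>s. lfn sc \<phi>"
  using Vd_lfn by blast

lemma pv_cov_contrL:
  assumes "\<phi> \<in> Vd" "T \<in> ftens 2"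
  shows "pv [cov, \<phi>] T = \<phi> (contrL sc cov T)"
proof -
  have "\<phi> (contrL sc cov T) = (\<Sum>xs\<in>fsupp T. T xs * cov (xs!0) * \<phi> (xs!1))"
    unfolding contrL_def lfn_sum[OF Vd_lfn[OF assms(1)]] lfn_sc[OF Vd_lfn[OF assms(1)]] ..
  also have "\<dots> = pv [cov, \<phi>] T"
    unfolding pv_def
  proof (rule sum.cong[OF refl])
    fix xs assume "xs \<in> fsupp T"
    then obtain x0 x1 where "xs = [x0, x1]" using assms len2 ftensD(2) by metis
    thus "T xs * cov (xs!0) * \<phi> (xs!1) = T xs * ev [cov, \<phi>] xs" by simp
  qed
  finally show ?thesis by simp
qed

lemma pv_cov_Y: "\<phi> \<in> Vd \<Longrightarrow> pv [cov, \<phi>] (Y m y) = (if m = 0 then \<phi> y else 0)"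
  using pv_cov_contrL[OF _ hY] contrL_Y lfn_0[OF Vd_lfn] by simp

lemma pv_cov_S: "\<phi> \<in> Vd \<Longrightarrow> pv [cov, \<phi>] (S j x y) = (if j = 0 then cov y * \<phi> x else 0)"
  using pv_cov_contrL[OF _ hS] contrL_S lfn_0[OF Vd_lfn] lfn_sc[OF Vd_lfn] by simp

lemma pv_cov_Sx:
  assumes "\<phi> \<in> Vd" "T \<in> ftens 2"
  shows "pv [cov, \<phi>] (Sx S j T) = (if j = 0 then pv [\<phi>, cov] T else 0)"
proof -
  have "pv [cov, \<phi>] (Sx S j T) = (\<Sum>xs\<in>fsupp T. T xs * (if j = 0 then cov (xs!1) * \<phi> (xs!0) else 0))"
    unfolding pv_Sx[OF hY hS assms(2)] pv_cov_S[OF assms(1)] ..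
  also have "\<dots> = (if j = 0 then pv [\<phi>, cov] T else 0)"
  proof (cases "j = 0")
    case False thus ?thesis by simp
  next
    case True
    have "(\<Sum>xs\<in>fsupp T. T xs * (cov (xs!1) * \<phi> (xs!0))) = pv [\<phi>, cov] T"
      unfolding pv_def
    proof (rule sum.cong[OF refl])
      fix xs assume "xs \<in> fsupp T"
      then obtain x0 x1 where "xs = [x0, x1]" using assms len2 ftensD(2) by metis
      thus "T xs * (cov (xs!1) * \<phi> (xs!0)) = T xs * ev [\<phi>, cov] xs" by (simp add: mult_ac)
    qed
    thus ?thesis using True by simp
  qed
  finally show ?thesis .
qed

lemma ftens_tsum:
  assumes "finite F" "\<And>j. f j \<in> ftens n"
  shows "\<forall>j\<in>F. finite (fsupp (f j))"
  using assms ftensD by blast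

lemma D_pv:
  assumes "\<phi> \<in> Vd"
  shows "\<phi> (D p a) = pv [\<phi>, cov] (Y p a)"
proof -
  obtain F where F: "finite F" "\<forall>j. j \<notin> F \<longrightarrow> ten_eq sc 2 (Sx S j (Y (p + j) a)) tzero"
    "ten_eq sc 2 (tsum F (\<lambda>j. Sx S j (Y (p + j) a))) (tsum {k. D k a \<noteq> 0} (\<lambda>k. Y (k - p) (D k a)))"
    using skew[of p a] unfolding has_tsum_def by blast
  have lf: "\<forall>\<psi>\<in>set [cov, \<phi>]. lfn sc \<psi>" using assms cov_Vd Vd_lfn by auto
  have "pv [cov, \<phi>] (tsum F (\<lambda>j. Sx S j (Y (p + j) a))) = pv [cov, \<phi>] (tsum {k. D k a \<noteq> 0} (\<lambda>k. Y (k - p) (D k a)))"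
    by (rule pv_ten_eq[OF F(3) _ lf]) simp
  moreover have "pv [cov, \<phi>] (tsum F (\<lambda>j. Sx S j (Y (p + j) a))) = pv [\<phi>, cov] (Y p a)"
  proof -
    have "pv [cov, \<phi>] (tsum F (\<lambda>j. Sx S j (Y (p + j) a))) = (\<Sum>j\<in>F. pv [cov, \<phi>] (Sx S j (Y (p + j) a)))"
      by (rule pv_tsum[OF F(1)]) (simp add: ftensD(1)[OF ftens_Sx[OF hY hS hY]])
    also have "\<dots> = (\<Sum>j\<in>F. if j = 0 then pv [\<phi>, cov] (Y p a) else 0)"
      by (intro sum.cong refl) (simp add: pv_cov_Sx[OF assms hY])
    also have "\<dots> = pv [\<phi>, cov] (Y p a)"
    proof (cases "0 \<in> F")
      case True thus ?thesis using F(1) by (simp add: sum.delta')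
    next
      case False
      hence "ten_eq sc 2 (Sx S 0 (Y p a)) tzero" using F(2) by fastforce
      hence "pv [cov, \<phi>] (Sx S 0 (Y p a)) = pv [cov, \<phi>] tzero" by (rule pv_ten_eq) (use lf in auto)
      hence "pv [\<phi>, cov] (Y p a) = 0" by (simp add: pv_cov_Sx[OF assms hY] pv_tzero)
      thus ?thesis using False by (simp add: sum.neutral)
    qed
    finally show ?thesis .
  qed
  moreover have "pv [cov, \<phi>] (tsum {k. D k a \<noteq> 0} (\<lambda>k. Y (k - p) (D k a))) = \<phi> (D p a)"
  proof -
    have "pv [cov, \<phi>] (tsum {k. D k a \<noteq> 0} (\<lambda>k. Y (k - p) (D k a))) = (\<Sum>k\<in>{k. D k a \<noteq> 0}. pv [cov, \<phi>] (Y (k - p) (D k a)))"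
      by (rule pv_tsum[OF Dfin]) (simp add: ftensD(1)[OF hY])
    also have "\<dots> = (\<Sum>k\<in>{k. D k a \<noteq> 0}. if k = p then \<phi> (D k a) else 0)"
      by (intro sum.cong refl) (simp add: pv_cov_Y[OF assms])
    also have "\<dots> = \<phi> (D p a)"
      using Dfin[of a] lfn_0[OF Vd_lfn[OF assms]] by (simp add: sum.delta')
    finally show ?thesis .
  qed
  ultimately show ?thesis by simp
qed

lemma ftens_pure1: "(pure [y] :: ('r,'v) ten) \<in> ftens 1"
  using ftens_pure[of "[y]"] by simp

lemma pcoeff_coA: "pcoeff \<Phi> (\<lambda>t (m, k). single (YL Y m (Yx Y k t))) t (m, k) = pair \<Phi> (YL Y m (Yx Y k t))"
  by (rule pcoeff_single) simp
lemma pcoeff_coB: "pcoeff \<Phi> (\<lambda>t (m, k). single (YR Y (k - m) (Yx Y m t))) t (m, k) = pair \<Phi> (YR Y (k - m) (Yx Y m t))"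
  by (rule pcoeff_single) simp
lemma pcoeff_YSA: "pcoeff \<Phi> (\<lambda>t (m, k). single (YL Y m (Sx S k t))) t (m, k) = pair \<Phi> (YL Y m (Sx S k t))"
  by (rule pcoeff_single) simp

lemma coassoc_pv:
  assumes "set \<psi>s \<subseteq> Vd" "length \<psi>s = 3" "t \<in> ftens 1"
  shows "pv \<psi>s (YL Y m (Yx Y k t)) = pv \<psi>s (YR Y (k - m) (Yx Y m t))"
proof -
  have P: "pure \<psi>s \<in> dualten Vd 3" using pure_dualten[OF assms(1,2)] .
  have "pcoeff (pure \<psi>s) (\<lambda>t (m, k). single (YL Y m (Yx Y k t))) t (m, k) =
        pcoeff (pure \<psi>s) (\<lambda>t (m, k). single (YR Y (k - m) (Yx Y m t))) t (m, k)"
    using coassoc P assms(3) unfolding op_equiv_def by blast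
  thus ?thesis unfolding pcoeff_coA pcoeff_coB pair_pure .
qed

lemma pv_cov_YL0:
  assumes "\<phi>1 \<in> Vd" "T \<in> ftens 2"
  shows "pv [cov, \<phi>1, \<phi>2] (YL Y 0 T) = pv [\<phi>1, \<phi>2] T"
proof -
  have "pv [cov, \<phi>1, \<phi>2] (YL Y 0 T) = (\<Sum>xs\<in>fsupp T. T xs * (pv [cov, \<phi>1] (Y 0 (xs!0)) * \<phi>2 (xs!1)))"
    by (rule pv_YL[OF hY hS assms(2)])
  also have "\<dots> = (\<Sum>xs\<in>fsupp T. T xs * ev [\<phi>1, \<phi>2] xs)"
  proof (rule sum.cong[OF refl])
    fix xs assume "xs \<in> fsupp T"
    then obtain x0 x1 where "xs = [x0, x1]" using assms len2 ftensD(2) by metis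
    thus "T xs * (pv [cov, \<phi>1] (Y 0 (xs!0)) * \<phi>2 (xs!1)) = T xs * ev [\<phi>1, \<phi>2] xs"
      by (simp add: pv_cov_Y[OF assms(1)])
  qed
  finally show ?thesis by (simp add: pv_def)
qed

lemma R1:
  assumes "\<phi>1 \<in> Vd" "\<phi>2 \<in> Vd"
  shows "\<exists>\<Psi>\<in>dualten Vd 1. \<forall>y. pv [\<phi>1, \<phi>2] (Y m y) = pair \<Psi> (pure [y])"
proof -
  have P: "pure [cov, \<phi>1, \<phi>2] \<in> dualten Vd 3" using pure_dualten[of "[cov, \<phi>1, \<phi>2]"] assms cov_Vd by simp
  have "in_dser Vd 1 (pcoeff (pure [cov, \<phi>1, \<phi>2]) (\<lambda>t (m, k). single (YL Y m (Yx Y k t))))"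
    using coassoc P unfolding op_equiv_def by blast
  then obtain \<Psi> where \<Psi>: "\<Psi> \<in> dualten Vd 1"
    "\<forall>t\<in>ftens 1. pcoeff (pure [cov, \<phi>1, \<phi>2]) (\<lambda>t (m, k). single (YL Y m (Yx Y k t))) t (0, m) = pair \<Psi> t"
    unfolding in_dser_def by blast
  have "pv [\<phi>1, \<phi>2] (Y m y) = pair \<Psi> (pure [y])" for y
  proof -
    have "pcoeff (pure [cov, \<phi>1, \<phi>2]) (\<lambda>t (m, k). single (YL Y m (Yx Y k t))) (pure [y]) (0, m) = pair \<Psi> (pure [y])"
      using \<Psi>(2) ftens_pure1[of y] by blast
    moreover have "pcoeff (pure [cov, \<phi>1, \<phi>2]) (\<lambda>t (m, k). single (YL Y m (Yx Y k t))) (pure [y]) (0, m) = pv [\<phi>1, \<phi>2] (Y m y)"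
      unfolding pcoeff_coA pair_pure Yx_pure[OF hY hS] by (rule pv_cov_YL0[OF assms(1) hY])
    ultimately show ?thesis by simp
  qed
  thus ?thesis using \<Psi>(1) by blast
qed

lemma R2:
  assumes "\<phi>1 \<in> Vd" "\<phi>2 \<in> Vd"
  shows "\<exists>\<Psi>\<in>dualten Vd 2. \<forall>T\<in>ftens 2. pv [\<phi>1, \<phi>2] (Sx S j T) = pair \<Psi> T"
proof -
  have P: "pure [cov, \<phi>1, \<phi>2] \<in> dualten Vd 3" using pure_dualten[of "[cov, \<phi>1, \<phi>2]"] assms cov_Vd by simp
  have "in_dser Vd 2 (pcoeff (pure [cov, \<phi>1, \<phi>2]) (\<lambda>t (m, k). single (YL Y m (Sx S k t))))"
    using YSax P unfolding op_equiv_def by blast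
  then obtain \<Psi> where \<Psi>: "\<Psi> \<in> dualten Vd 2"
    "\<forall>t\<in>ftens 2. pcoeff (pure [cov, \<phi>1, \<phi>2]) (\<lambda>t (m, k). single (YL Y m (Sx S k t))) t (0, j) = pair \<Psi> t"
    unfolding in_dser_def by blast
  have "pv [\<phi>1, \<phi>2] (Sx S j T) = pair \<Psi> T" if "T \<in> ftens 2" for T
  proof -
    have "pcoeff (pure [cov, \<phi>1, \<phi>2]) (\<lambda>t (m, k). single (YL Y m (Sx S k t))) T (0, j) = pair \<Psi> T"
      using \<Psi>(2) that by blast
    moreover have "pcoeff (pure [cov, \<phi>1, \<phi>2]) (\<lambda>t (m, k). single (YL Y m (Sx S k t))) T (0, j) = pv [\<phi>1, \<phi>2] (Sx S j T)"
      unfolding pcoeff_YSA pair_pure by (rule pv_cov_YL0[OF assms(1) ftens_Sx[OF hY hS that]])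
    ultimately show ?thesis by simp
  qed
  thus ?thesis using \<Psi>(1) by blast
qed

lemma Kbound:
  assumes "\<phi>1 \<in> Vd" "\<phi>2 \<in> Vd"
  shows "\<exists>K. \<forall>p>K. \<forall>y. pv [\<phi>1, \<phi>2] (Y p y) = 0"
proof -
  have P: "pure [cov, \<phi>1, \<phi>2] \<in> dualten Vd 3" using pure_dualten[of "[cov, \<phi>1, \<phi>2]"] assms cov_Vd by simp
  have "in_dser Vd 1 (pcoeff (pure [cov, \<phi>1, \<phi>2]) (\<lambda>t (m, k). single (YL Y m (Yx Y k t))))"
    using coassoc P unfolding op_equiv_def by blast
  then obtain M K where MK: "\<forall>t\<in>ftens 1. \<forall>m n. (m > M \<or> n > K) \<longrightarrow>
      pcoeff (pure [cov, \<phi>1, \<phi>2]) (\<lambda>t (m, k). single (YL Y m (Yx Y k t))) t (m, n) = 0"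
    unfolding in_dser_def by blast
  have "pv [\<phi>1, \<phi>2] (Y p y) = 0" if "p > K" for p y
  proof -
    have "pcoeff (pure [cov, \<phi>1, \<phi>2]) (\<lambda>t (m, k). single (YL Y m (Yx Y k t))) (pure [y]) (0, p) = 0"
      using MK ftens_pure1[of y] that by blast
    moreover have "pcoeff (pure [cov, \<phi>1, \<phi>2]) (\<lambda>t (m, k). single (YL Y m (Yx Y k t))) (pure [y]) (0, p) = pv [\<phi>1, \<phi>2] (Y p y)"
      unfolding pcoeff_coA pair_pure Yx_pure[OF hY hS] by (rule pv_cov_YL0[OF assms(1) hY])
    ultimately show ?thesis by simp
  qed
  thus ?thesis by blast
qed

lemma Gen:
  assumes \<Psi>: "\<Psi> \<in> dualten Vd n" and T: "T \<in> ftens (Suc n)"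
  shows "(\<Sum>ys\<in>fsupp T. T ys * (pair \<Psi> (pure (take n ys)) * c (ys!n))) = (\<Sum>\<psi>s\<in>fsupp \<Psi>. \<Psi> \<psi>s * pv (\<psi>s @ [c]) T)"
proof -
  have "(\<Sum>ys\<in>fsupp T. T ys * (pair \<Psi> (pure (take n ys)) * c (ys!n))) =
        (\<Sum>ys\<in>fsupp T. \<Sum>\<psi>s\<in>fsupp \<Psi>. \<Psi> \<psi>s * (T ys * ev (\<psi>s @ [c]) ys))"
  proof (rule sum.cong[OF refl])
    fix ys assume ys: "ys \<in> fsupp T"
    hence ly: "length ys = Suc n" using T ftensD(2) by blast
    hence ys_eq: "ys = take n ys @ [ys!n]" by (metis id_take_nth_drop lessI append_Cons append_Nil drop_all le_refl)
    have "ev (\<psi>s @ [c]) ys = ev \<psi>s (take n ys) * c (ys!n)" if "\<psi>s \<in> fsupp \<Psi>" for \<psi>s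
    proof -
      have "length \<psi>s = length (take n ys)" using dualtenD(2)[OF \<Psi> that] ly by simp
      hence "ev (\<psi>s @ [c]) (take n ys @ [ys!n]) = ev \<psi>s (take n ys) * ev [c] [ys!n]" by (rule ev_append)
      thus ?thesis using ys_eq by simp
    qed
    thus "T ys * (pair \<Psi> (pure (take n ys)) * c (ys!n)) = (\<Sum>\<psi>s\<in>fsupp \<Psi>. \<Psi> \<psi>s * (T ys * ev (\<psi>s @ [c]) ys))"
      by (simp add: pair_pv pv_pure sum_distrib_left sum_distrib_right mult_ac cong: sum.cong)
  qed
  also have "\<dots> = (\<Sum>\<psi>s\<in>fsupp \<Psi>. \<Psi> \<psi>s * pv (\<psi>s @ [c]) T)"
    by (subst sum.swap) (simp add: pv_def sum_distrib_left)
  finally show ?thesis .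
qed

lemma G3:
  assumes \<Psi>: "\<Psi> \<in> dualten Vd 2" and T: "T \<in> ftens 2"
  shows "(\<Sum>\<psi>s\<in>fsupp \<Psi>. \<Psi> \<psi>s * pv (\<psi>s @ [c]) (YL Y m T)) = (\<Sum>ys\<in>fsupp T. T ys * (pair \<Psi> (Y m (ys!0)) * c (ys!1)))"
proof -
  have "(\<Sum>\<psi>s\<in>fsupp \<Psi>. \<Psi> \<psi>s * pv (\<psi>s @ [c]) (YL Y m T)) =
        (\<Sum>\<psi>s\<in>fsupp \<Psi>. \<Sum>ys\<in>fsupp T. \<Psi> \<psi>s * (T ys * (pv \<psi>s (Y m (ys!0)) * c (ys!1))))"
  proof (rule sum.cong[OF refl])
    fix \<psi>s assume "\<psi>s \<in> fsupp \<Psi>"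
    then obtain a b where "\<psi>s = [a, b]" using dualtenD(2)[OF \<Psi>] len2 by metis
    thus "\<Psi> \<psi>s * pv (\<psi>s @ [c]) (YL Y m T) = (\<Sum>ys\<in>fsupp T. \<Psi> \<psi>s * (T ys * (pv \<psi>s (Y m (ys!0)) * c (ys!1))))"
      by (simp add: pv_YL[OF hY hS T] sum_distrib_left)
  qed
  also have "\<dots> = (\<Sum>ys\<in>fsupp T. T ys * (pair \<Psi> (Y m (ys!0)) * c (ys!1)))"
    by (subst sum.swap) (simp add: pair_pv sum_distrib_left sum_distrib_right mult_ac)
  finally show ?thesis .
qed

lemma Gen1:
  assumes \<Psi>: "\<Psi> \<in> dualten Vd 1" and T: "T \<in> ftens 2"
  shows "(\<Sum>ys\<in>fsupp T. T ys * (pair \<Psi> (pure [ys!0]) * c (ys!1))) = (\<Sum>\<psi>s\<in>fsupp \<Psi>. \<Psi> \<psi>s * pv (\<psi>s @ [c]) T)"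
proof -
  have T': "T \<in> ftens (Suc 1)" using T by (simp add: numeral_eq_Suc)
  have "(\<Sum>ys\<in>fsupp T. T ys * (pair \<Psi> (pure [ys!0]) * c (ys!1))) = (\<Sum>ys\<in>fsupp T. T ys * (pair \<Psi> (pure (take 1 ys)) * c (ys!1)))"
  proof (rule sum.cong[OF refl])
    fix ys assume "ys \<in> fsupp T"
    then obtain y0 y1 where "ys = [y0, y1]" using T len2 ftensD(2) by metis
    thus "T ys * (pair \<Psi> (pure [ys!0]) * c (ys!1)) = T ys * (pair \<Psi> (pure (take 1 ys)) * c (ys!1))" by simp
  qed
  also have "\<dots> = (\<Sum>\<psi>s\<in>fsupp \<Psi>. \<Psi> \<psi>s * pv (\<psi>s @ [c]) T)" by (rule Gen[OF \<Psi> T'])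
  finally show ?thesis .
qed

lemma pair1_pure:
  assumes "\<Psi> \<in> dualten Vd 1"
  shows "pair \<Psi> (pure [y]) = (\<Sum>\<psi>s\<in>fsupp \<Psi>. \<Psi> \<psi>s * (\<psi>s!0) y)"
  unfolding pair_pv pv_pure
proof (rule sum.cong[OF refl])
  fix \<psi>s assume "\<psi>s \<in> fsupp \<Psi>"
  then obtain a where "\<psi>s = [a]" using dualtenD(2)[OF assms] len1 by metis
  thus "\<Psi> \<psi>s * ev \<psi>s [y] = \<Psi> \<psi>s * (\<psi>s!0) y" by simp
qed

lemma P1a:
  assumes "\<phi>1 \<in> Vd" "\<phi>2 \<in> Vd" "t \<in> ftens 1"
  shows "pv [\<phi>1, \<phi>2] (Yx Y m (Dx D k t)) = pv [\<phi>1, \<phi>2, cov] (YL Y m (Yx Y k t))"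
proof -
  obtain \<Psi> where \<Psi>: "\<Psi> \<in> dualten Vd 1" "\<forall>y. pv [\<phi>1, \<phi>2] (Y m y) = pair \<Psi> (pure [y])"
    using R1[OF assms(1,2)] by blast
  have ft: "finite (fsupp t)" using assms(3) by (rule ftensD)
  have W: "Yx Y k t \<in> ftens 2" by (rule ftens_Yx[OF hY hS ft])
  have vd: "\<psi>s!0 \<in> Vd" if "\<psi>s \<in> fsupp \<Psi>" for \<psi>s
    using dualtenD[OF \<Psi>(1)] that by (metis len1 list.set_intros(1) subsetD)
  have e1: "\<psi>s @ [cov] = [\<psi>s!0, cov]" if "\<psi>s \<in> fsupp \<Psi>" for \<psi>s
    using dualtenD(2)[OF \<Psi>(1) that] len1 by (metis append_Cons append_Nil)
  have "pv [\<phi>1, \<phi>2] (Yx Y m (Dx D k t)) = (\<Sum>xs\<in>fsupp t. t xs * pv [\<phi>1, \<phi>2] (Y m (D k (xs!0))))"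
    by (rule pv_Yx_Dx[OF hY hS ft])
  also have "\<dots> = (\<Sum>xs\<in>fsupp t. t xs * (\<Sum>\<psi>s\<in>fsupp \<Psi>. \<Psi> \<psi>s * pv [\<psi>s!0, cov] (Y k (xs!0))))"
    by (intro sum.cong refl) (simp add: \<Psi>(2) pair1_pure[OF \<Psi>(1)] D_pv vd)
  also have "\<dots> = (\<Sum>\<psi>s\<in>fsupp \<Psi>. \<Psi> \<psi>s * (\<Sum>xs\<in>fsupp t. t xs * pv [\<psi>s!0, cov] (Y k (xs!0))))"
    unfolding sum_distrib_left by (subst sum.swap) (simp add: mult.left_commute)
  also have "\<dots> = (\<Sum>\<psi>s\<in>fsupp \<Psi>. \<Psi> \<psi>s * pv (\<psi>s @ [cov]) (Yx Y k t))"
    by (intro sum.cong refl) (simp add: pv_Yx[OF hY hS ft] e1)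
  also have "\<dots> = (\<Sum>ys\<in>fsupp (Yx Y k t). Yx Y k t ys * (pair \<Psi> (pure [ys!0]) * cov (ys!1)))"
    by (rule Gen1[OF \<Psi>(1) W, symmetric])
  also have "\<dots> = pv [\<phi>1, \<phi>2, cov] (YL Y m (Yx Y k t))"
    by (simp add: pv_YL[OF hY hS W] \<Psi>(2))
  finally show ?thesis .
qed

lemma P1b:
  assumes "\<phi>1 \<in> Vd" "\<phi>2 \<in> Vd" "t \<in> ftens 1"
  shows "pv [\<phi>1, \<phi>2] (DR D n (Yx Y m t)) = pv [\<phi>1, \<phi>2, cov] (YR Y n (Yx Y m t))"
proof -
  have ft: "finite (fsupp t)" using assms(3) by (rule ftensD)
  have W: "Yx Y m t \<in> ftens 2" by (rule ftens_Yx[OF hY hS ft])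
  show ?thesis
    unfolding pv_DR[OF hY hS W] pv_YR[OF hY hS W] by (simp add: D_pv[OF assms(2)])
qed

lemma part1:
  "op_equiv Vd 1 2
       (\<lambda>t (m, k). single (Yx Y m (Dx D k t)))
       (\<lambda>t (m, k). single (DR D (k - m) (Yx Y m t)))"
  unfolding op_equiv_def
proof (intro ballI)
  fix \<Phi> assume \<Phi>: "\<Phi> \<in> dualten Vd 2"
  let ?A = "\<lambda>t (m, k). single (Yx Y m (Dx D k t))"
  let ?B = "\<lambda>t (m, k). single (DR D (k - m) (Yx Y m t))"
  let ?cA = "\<lambda>t (m, k). single (YL Y m (Yx Y k t))"
  let ?cB = "\<lambda>t (m, k). single (YR Y (k - m) (Yx Y m t))"
  let ?\<Phi>' = "appd \<Phi> cov"
  have \<Phi>': "?\<Phi>' \<in> dualten Vd 3" using appd_dualten[OF \<Phi> cov_Vd] by (simp add: numeral_eq_Suc)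
  have co: "in_dser Vd 1 (pcoeff ?\<Phi>' ?cA) \<and> in_dser Vd 1 (pcoeff ?\<Phi>' ?cB) \<and>
           (\<forall>t\<in>ftens 1. \<forall>mk. pcoeff ?\<Phi>' ?cA t mk = pcoeff ?\<Phi>' ?cB t mk)"
    using coassoc \<Phi>' unfolding op_equiv_def by blast
  have vd2: "\<phi>s = [\<phi>s!0, \<phi>s!1] \<and> \<phi>s!0 \<in> Vd \<and> \<phi>s!1 \<in> Vd" if "\<phi>s \<in> fsupp \<Phi>" for \<phi>s
  proof -
    have l: "length \<phi>s = 2" using \<Phi> that by (simp add: dualten_def)
    have st: "set \<phi>s \<subseteq> Vd" using \<Phi> that by (simp add: dualten_def)
    obtain a b where ab: "\<phi>s = [a, b]" using l len2 by metis
    thus ?thesis using st by simp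
  qed
  have eqA: "pcoeff \<Phi> ?A t mk = pcoeff ?\<Phi>' ?cA t mk" if t: "t \<in> ftens 1" for t mk
  proof (cases mk)
    case (Pair m k)
    have "pcoeff \<Phi> ?A t (m, k) = pair \<Phi> (Yx Y m (Dx D k t))" by (rule pcoeff_single) simp
    also have "\<dots> = (\<Sum>\<phi>s\<in>fsupp \<Phi>. \<Phi> \<phi>s * pv (\<phi>s @ [cov]) (YL Y m (Yx Y k t)))"
      unfolding pair_pv
    proof (rule sum.cong[OF refl])
      fix \<phi>s assume "\<phi>s \<in> fsupp \<Phi>"
      hence h: "\<phi>s = [\<phi>s!0, \<phi>s!1]" "\<phi>s!0 \<in> Vd" "\<phi>s!1 \<in> Vd" using vd2 by auto
      have "pv [\<phi>s!0, \<phi>s!1] (Yx Y m (Dx D k t)) = pv [\<phi>s!0, \<phi>s!1, cov] (YL Y m (Yx Y k t))"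
        by (rule P1a[OF h(2,3) t])
      thus "\<Phi> \<phi>s * pv \<phi>s (Yx Y m (Dx D k t)) = \<Phi> \<phi>s * pv (\<phi>s @ [cov]) (YL Y m (Yx Y k t))"
        using h(1) by (metis append_Cons append_Nil)
    qed
    also have "\<dots> = pcoeff ?\<Phi>' ?cA t (m, k)" unfolding pcoeff_coA pair_appd ..
    finally show ?thesis using Pair by simp
  qed
  have eqB: "pcoeff \<Phi> ?B t mk = pcoeff ?\<Phi>' ?cB t mk" if t: "t \<in> ftens 1" for t mk
  proof (cases mk)
    case (Pair m k)
    have "pcoeff \<Phi> ?B t (m, k) = pair \<Phi> (DR D (k - m) (Yx Y m t))" by (rule pcoeff_single) simp
    also have "\<dots> = (\<Sum>\<phi>s\<in>fsupp \<Phi>. \<Phi> \<phi>s * pv (\<phi>s @ [cov]) (YR Y (k - m) (Yx Y m t)))"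
      unfolding pair_pv
    proof (rule sum.cong[OF refl])
      fix \<phi>s assume "\<phi>s \<in> fsupp \<Phi>"
      hence h: "\<phi>s = [\<phi>s!0, \<phi>s!1]" "\<phi>s!0 \<in> Vd" "\<phi>s!1 \<in> Vd" using vd2 by auto
      have "pv [\<phi>s!0, \<phi>s!1] (DR D (k - m) (Yx Y m t)) = pv [\<phi>s!0, \<phi>s!1, cov] (YR Y (k - m) (Yx Y m t))"
        by (rule P1b[OF h(2,3) t])
      thus "\<Phi> \<phi>s * pv \<phi>s (DR D (k - m) (Yx Y m t)) = \<Phi> \<phi>s * pv (\<phi>s @ [cov]) (YR Y (k - m) (Yx Y m t))"
        using h(1) by (metis append_Cons append_Nil)
    qed
    also have "\<dots> = pcoeff ?\<Phi>' ?cB t (m, k)" unfolding pcoeff_coB pair_appd ..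
    finally show ?thesis using Pair by simp
  qed
  have finA: "finite (fsupp (\<lambda>j. pair \<Phi> (?A t mk j)))" for t mk
  proof (cases mk)
    case (Pair m k) show ?thesis unfolding Pair by (rule pcoeff_single(2)) simp
  qed
  have finB: "finite (fsupp (\<lambda>j. pair \<Phi> (?B t mk j)))" for t mk
  proof (cases mk)
    case (Pair m k) show ?thesis unfolding Pair by (rule pcoeff_single(2)) simp
  qed
  have dA: "in_dser Vd 1 (pcoeff \<Phi> ?A)"
    using co in_dser_cong[of 1 "pcoeff \<Phi> ?A" "pcoeff ?\<Phi>' ?cA" Vd] eqA by blast
  have dB: "in_dser Vd 1 (pcoeff \<Phi> ?B)"
    using co in_dser_cong[of 1 "pcoeff \<Phi> ?B" "pcoeff ?\<Phi>' ?cB" Vd] eqB by blast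
  have eq: "\<forall>t\<in>ftens 1. \<forall>mk. pcoeff \<Phi> ?A t mk = pcoeff \<Phi> ?B t mk"
    using co eqA eqB by simp
  show "(\<forall>t\<in>ftens 1. \<forall>mk. finite (fsupp (\<lambda>j. pair \<Phi> (?A t mk j))) \<and> finite (fsupp (\<lambda>j. pair \<Phi> (?B t mk j)))) \<and>
        in_dser Vd 1 (pcoeff \<Phi> ?A) \<and> in_dser Vd 1 (pcoeff \<Phi> ?B) \<and>
        (\<forall>t\<in>ftens 1. \<forall>mk. pcoeff \<Phi> ?A t mk = pcoeff \<Phi> ?B t mk)"
    using finA finB dA dB eq by blast
qed

lemma P2_step1:
  assumes "\<phi>1 \<in> Vd" "\<phi>2 \<in> Vd" "\<phi>3 \<in> Vd" "t \<in> ftens 1"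
  shows "pv [\<phi>1, \<phi>2, \<phi>3] (SL S j (YR Y (q - j) (Yx Y (p + j) t))) =
    (\<Sum>ys\<in>fsupp (Yx Y (p + q) t). Yx Y (p + q) t ys * (pv [\<phi>1, \<phi>2] (Sx S j (Y (p + j) (ys!0))) * \<phi>3 (ys!1)))"
proof -
  obtain \<Psi> where \<Psi>: "\<Psi> \<in> dualten Vd 2" "\<forall>T\<in>ftens 2. pv [\<phi>1, \<phi>2] (Sx S j T) = pair \<Psi> T"
    using R2[OF assms(1,2)] by blast
  have ft: "finite (fsupp t)" using assms(4) by (rule ftensD)
  have W: "Yx Y (p + q) t \<in> ftens 2" by (rule ftens_Yx[OF hY hS ft])
  have X: "YR Y (q - j) (Yx Y (p + j) t) \<in> ftens 3" by (rule ftens_YR[OF hY hS ftens_Yx[OF hY hS ft]])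
  have X': "YR Y (q - j) (Yx Y (p + j) t) \<in> ftens (Suc 2)" using X by simp
  have p2: "(pure [x, y] :: ('r,'v) ten) \<in> ftens 2" for x y using ftens_pure[of "[x,y]"] by (simp add: numeral_eq_Suc)
  let ?X = "YR Y (q - j) (Yx Y (p + j) t)"
  have "pv [\<phi>1, \<phi>2, \<phi>3] (SL S j ?X) = (\<Sum>xs\<in>fsupp ?X. ?X xs * (pv [\<phi>1, \<phi>2] (S j (xs!0) (xs!1)) * \<phi>3 (xs!2)))"
    by (rule pv_SL[OF hY hS X])
  also have "\<dots> = (\<Sum>xs\<in>fsupp ?X. ?X xs * (pair \<Psi> (pure (take 2 xs)) * \<phi>3 (xs!2)))"
  proof (rule sum.cong[OF refl])
    fix xs assume "xs \<in> fsupp ?X"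
    then obtain x0 x1 x2 where xs: "xs = [x0, x1, x2]" using X len3 ftensD(2) by metis
    have "pv [\<phi>1, \<phi>2] (S j x0 x1) = pv [\<phi>1, \<phi>2] (Sx S j (pure [x0, x1]))"
      by (rule Sx_pure[OF hY hS, symmetric])
    also have "\<dots> = pair \<Psi> (pure [x0, x1])" using \<Psi>(2) p2 by blast
    finally have "pv [\<phi>1, \<phi>2] (S j x0 x1) = pair \<Psi> (pure [x0, x1])" .
    thus "?X xs * (pv [\<phi>1, \<phi>2] (S j (xs!0) (xs!1)) * \<phi>3 (xs!2)) = ?X xs * (pair \<Psi> (pure (take 2 xs)) * \<phi>3 (xs!2))"
      unfolding xs by (simp add: numeral_eq_Suc)
  qed
  also have "\<dots> = (\<Sum>\<psi>s\<in>fsupp \<Psi>. \<Psi> \<psi>s * pv (\<psi>s @ [\<phi>3]) ?X)"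
    by (rule Gen[OF \<Psi>(1) X'])
  also have "\<dots> = (\<Sum>\<psi>s\<in>fsupp \<Psi>. \<Psi> \<psi>s * pv (\<psi>s @ [\<phi>3]) (YL Y (p + j) (Yx Y (p + q) t)))"
  proof (rule sum.cong[OF refl])
    fix \<psi>s assume h: "\<psi>s \<in> fsupp \<Psi>"
    have "set (\<psi>s @ [\<phi>3]) \<subseteq> Vd" "length (\<psi>s @ [\<phi>3]) = 3"
      using dualtenD(2,3)[OF \<Psi>(1) h] assms(3) by auto
    from coassoc_pv[OF this assms(4), of "p + j" "p + q"]
    show "\<Psi> \<psi>s * pv (\<psi>s @ [\<phi>3]) ?X = \<Psi> \<psi>s * pv (\<psi>s @ [\<phi>3]) (YL Y (p + j) (Yx Y (p + q) t))"
      by simp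
  qed
  also have "\<dots> = (\<Sum>ys\<in>fsupp (Yx Y (p + q) t). Yx Y (p + q) t ys * (pair \<Psi> (Y (p + j) (ys!0)) * \<phi>3 (ys!1)))"
    by (rule G3[OF \<Psi>(1) W])
  also have "\<dots> = (\<Sum>ys\<in>fsupp (Yx Y (p + q) t). Yx Y (p + q) t ys * (pv [\<phi>1, \<phi>2] (Sx S j (Y (p + j) (ys!0))) * \<phi>3 (ys!1)))"
    using \<Psi>(2) hY by simp
  finally show ?thesis .
qed

lemma pv_cov_mid:
  assumes "\<psi> \<in> Vd" "\<phi>3 \<in> Vd" "t \<in> ftens 1"
  shows "pv [\<psi>, cov, \<phi>3] (YL Y k (Yx Y n t)) = (if k = n then pv [\<psi>, \<phi>3] (Yx Y k t) else 0)"
proof -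
  have ft: "finite (fsupp t)" using assms(3) by (rule ftensD)
  have V: "Yx Y k t \<in> ftens 2" by (rule ftens_Yx[OF hY hS ft])
  have "pv [\<psi>, cov, \<phi>3] (YL Y k (Yx Y n t)) = pv [\<psi>, cov, \<phi>3] (YR Y (n - k) (Yx Y k t))"
    by (rule coassoc_pv[OF _ _ assms(3)]) (use assms cov_Vd in auto)
  also have "\<dots> = (\<Sum>zs\<in>fsupp (Yx Y k t). Yx Y k t zs * (\<psi> (zs!0) * (if n - k = 0 then \<phi>3 (zs!1) else 0)))"
    unfolding pv_YR[OF hY hS V] pv_cov_Y[OF assms(2)] ..
  also have "\<dots> = (if k = n then pv [\<psi>, \<phi>3] (Yx Y k t) else 0)"
  proof (cases "k = n")
    case True
    have "(\<Sum>zs\<in>fsupp (Yx Y k t). Yx Y k t zs * (\<psi> (zs!0) * \<phi>3 (zs!1))) = pv [\<psi>, \<phi>3] (Yx Y k t)"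
      unfolding pv_def
    proof (rule sum.cong[OF refl])
      fix zs assume "zs \<in> fsupp (Yx Y k t)"
      then obtain z0 z1 where "zs = [z0, z1]" using V len2 ftensD(2) by metis
      thus "Yx Y k t zs * (\<psi> (zs!0) * \<phi>3 (zs!1)) = Yx Y k t zs * ev [\<psi>, \<phi>3] zs" by simp
    qed
    thus ?thesis using True by simp
  qed simp
  finally show ?thesis .
qed

lemma P2_step3:
  assumes "\<phi>1 \<in> Vd" "\<phi>2 \<in> Vd" "\<phi>3 \<in> Vd" "t \<in> ftens 1"
  shows "(\<Sum>ys\<in>fsupp (Yx Y (p + q) t). Yx Y (p + q) t ys *
            ((\<Sum>k\<in>{k. D k (ys!0) \<noteq> 0}. pv [\<phi>1, \<phi>2] (Y (k - p) (D k (ys!0)))) * \<phi>3 (ys!1)))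
         = pv [\<phi>1, \<phi>2, \<phi>3] (YR Y p (Yx Y q t))"
proof -
  have "\<forall>m. \<exists>\<Psi>. \<Psi> \<in> dualten Vd 1 \<and> (\<forall>y. pv [\<phi>1, \<phi>2] (Y m y) = pair \<Psi> (pure [y]))"
    using R1[OF assms(1,2)] by blast
  then obtain \<Psi>' where \<Psi>': "\<And>m. \<Psi>' m \<in> dualten Vd 1" "\<And>m y. pv [\<phi>1, \<phi>2] (Y m y) = pair (\<Psi>' m) (pure [y])"
    by metis
  have ft: "finite (fsupp t)" using assms(4) by (rule ftensD)
  define W where "W = Yx Y (p + q) t"
  have W: "W \<in> ftens 2" unfolding W_def by (rule ftens_Yx[OF hY hS ft])
  have fW: "finite (fsupp W)" using W by (rule ftensD)
  have vd: "\<psi>s!0 \<in> Vd" if "\<psi>s \<in> fsupp (\<Psi>' m)" for \<psi>s m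
    using dualtenD[OF \<Psi>'(1)] that by (metis len1 list.set_intros(1) subsetD)
  define H where "H k y = (\<Sum>\<psi>s\<in>fsupp (\<Psi>' (k - p)). \<Psi>' (k - p) \<psi>s * pv [\<psi>s!0, cov] (Y k y))" for k y
  have hH: "pv [\<phi>1, \<phi>2] (Y (k - p) (D k y)) = H k y" for k y
    unfolding H_def \<Psi>'(2) pair1_pure[OF \<Psi>'(1)] by (intro sum.cong refl) (simp add: D_pv vd)
  have h0: "pv [\<phi>1, \<phi>2] (Y (k - p) (D k y)) = 0" if "D k y = 0" for k y
    unfolding \<Psi>'(2) pair1_pure[OF \<Psi>'(1)] that by (intro sum.neutral ballI) (simp add: lfn_0[OF Vd_lfn[OF vd]])
  define K where "K = (\<Union>ys\<in>fsupp W. {k. D k (ys!0) \<noteq> 0}) \<union> {p + q}"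
  have fK: "finite K" unfolding K_def using fW Dfin by auto
  have a: "(\<Sum>k\<in>{k. D k (ys!0) \<noteq> 0}. pv [\<phi>1, \<phi>2] (Y (k - p) (D k (ys!0)))) = (\<Sum>k\<in>K. H k (ys!0))"
    if "ys \<in> fsupp W" for ys
  proof -
    have "(\<Sum>k\<in>{k. D k (ys!0) \<noteq> 0}. pv [\<phi>1, \<phi>2] (Y (k - p) (D k (ys!0)))) = (\<Sum>k\<in>K. pv [\<phi>1, \<phi>2] (Y (k - p) (D k (ys!0))))"
      by (rule sum.mono_neutral_left[OF fK]) (use that h0 in \<open>auto simp: K_def\<close>)
    thus ?thesis by (simp add: hH)
  qed
  have "(\<Sum>ys\<in>fsupp W. W ys * ((\<Sum>k\<in>{k. D k (ys!0) \<noteq> 0}. pv [\<phi>1, \<phi>2] (Y (k - p) (D k (ys!0)))) * \<phi>3 (ys!1)))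
      = (\<Sum>ys\<in>fsupp W. W ys * ((\<Sum>k\<in>K. H k (ys!0)) * \<phi>3 (ys!1)))"
    by (intro sum.cong refl) (simp add: a)
  also have "\<dots> = (\<Sum>ys\<in>fsupp W. \<Sum>k\<in>K. \<Sum>\<psi>s\<in>fsupp (\<Psi>' (k - p)). \<Psi>' (k - p) \<psi>s * (W ys * (pv [\<psi>s!0, cov] (Y k (ys!0)) * \<phi>3 (ys!1))))"
    by (simp add: H_def sum_distrib_left sum_distrib_right mult_ac)
  also have "\<dots> = (\<Sum>k\<in>K. \<Sum>\<psi>s\<in>fsupp (\<Psi>' (k - p)). \<Sum>ys\<in>fsupp W. \<Psi>' (k - p) \<psi>s * (W ys * (pv [\<psi>s!0, cov] (Y k (ys!0)) * \<phi>3 (ys!1))))"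
    by (subst sum.swap) (intro sum.cong refl, rule sum.swap)
  also have "\<dots> = (\<Sum>k\<in>K. \<Sum>\<psi>s\<in>fsupp (\<Psi>' (k - p)). \<Psi>' (k - p) \<psi>s * pv [\<psi>s!0, cov, \<phi>3] (YL Y k W))"
    by (intro sum.cong refl) (simp add: pv_YL[OF hY hS W] sum_distrib_left)
  also have "\<dots> = (\<Sum>k\<in>K. \<Sum>\<psi>s\<in>fsupp (\<Psi>' (k - p)). \<Psi>' (k - p) \<psi>s * (if k = p + q then pv [\<psi>s!0, \<phi>3] (Yx Y k t) else 0))"
    unfolding W_def by (intro sum.cong refl) (simp add: pv_cov_mid[OF vd assms(3,4)])
  also have "\<dots> = (\<Sum>k\<in>K. if k = p + q then (\<Sum>\<psi>s\<in>fsupp (\<Psi>' (k - p)). \<Psi>' (k - p) \<psi>s * pv [\<psi>s!0, \<phi>3] (Yx Y k t)) else 0)"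
    by (intro sum.cong refl) auto
  also have "\<dots> = (\<Sum>\<psi>s\<in>fsupp (\<Psi>' q). \<Psi>' q \<psi>s * pv [\<psi>s!0, \<phi>3] W)"
    using fK by (simp add: sum.delta' K_def W_def)
  also have "\<dots> = (\<Sum>\<psi>s\<in>fsupp (\<Psi>' q). \<Psi>' q \<psi>s * pv (\<psi>s @ [\<phi>3]) W)"
  proof (intro sum.cong refl)
    fix \<psi>s assume "\<psi>s \<in> fsupp (\<Psi>' q)"
    then obtain a where "\<psi>s = [a]" using dualtenD(2)[OF \<Psi>'(1)] len1 by metis
    thus "\<Psi>' q \<psi>s * pv [\<psi>s!0, \<phi>3] W = \<Psi>' q \<psi>s * pv (\<psi>s @ [\<phi>3]) W" by simp
  qed
  also have "\<dots> = (\<Sum>ys\<in>fsupp W. W ys * (pair (\<Psi>' q) (pure [ys!0]) * \<phi>3 (ys!1)))"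
    by (rule Gen1[OF \<Psi>'(1) W, symmetric])
  also have "\<dots> = pv [\<phi>1, \<phi>2, \<phi>3] (YL Y q W)"
    by (simp add: pv_YL[OF hY hS W] \<Psi>'(2))
  also have "\<dots> = pv [\<phi>1, \<phi>2, \<phi>3] (YR Y p (Yx Y q t))"
    unfolding W_def using coassoc_pv[OF _ _ assms(4), of "[\<phi>1, \<phi>2, \<phi>3]" q "p + q"] assms by simp
  finally show ?thesis unfolding W_def .
qed

lemma P2:
  assumes "\<phi>1 \<in> Vd" "\<phi>2 \<in> Vd" "\<phi>3 \<in> Vd" "t \<in> ftens 1"
  shows "finite (fsupp (\<lambda>j. pv [\<phi>1, \<phi>2, \<phi>3] (SL S j (YR Y (q - j) (Yx Y (p + j) t))))) \<and>
         (\<Sum>j\<in>fsupp (\<lambda>j. pv [\<phi>1, \<phi>2, \<phi>3] (SL S j (YR Y (q - j) (Yx Y (p + j) t)))).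
              pv [\<phi>1, \<phi>2, \<phi>3] (SL S j (YR Y (q - j) (Yx Y (p + j) t))))
         = pv [\<phi>1, \<phi>2, \<phi>3] (YR Y p (Yx Y q t))"
proof -
  let ?a = "\<lambda>j. pv [\<phi>1, \<phi>2, \<phi>3] (SL S j (YR Y (q - j) (Yx Y (p + j) t)))"
  have ft: "finite (fsupp t)" using assms(4) by (rule ftensD)
  define W where "W = Yx Y (p + q) t"
  have W: "W \<in> ftens 2" unfolding W_def by (rule ftens_Yx[OF hY hS ft])
  have fW: "finite (fsupp W)" using W by (rule ftensD)
  define g where "g j y = pv [\<phi>1, \<phi>2] (Sx S j (Y (p + j) y))" for j y
  have "\<forall>y. \<exists>F. finite F \<and> (\<forall>j. j \<notin> F \<longrightarrow> ten_eq sc 2 (Sx S j (Y (p + j) y)) tzero) \<and>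
          ten_eq sc 2 (tsum F (\<lambda>j. Sx S j (Y (p + j) y))) (tsum {k. D k y \<noteq> 0} (\<lambda>k. Y (k - p) (D k y)))"
    using skew unfolding has_tsum_def by blast
  from choice[OF this] obtain F where F0: "\<forall>y. finite (F y) \<and> (\<forall>j. j \<notin> F y \<longrightarrow> ten_eq sc 2 (Sx S j (Y (p + j) y)) tzero) \<and>
          ten_eq sc 2 (tsum (F y) (\<lambda>j. Sx S j (Y (p + j) y))) (tsum {k. D k y \<noteq> 0} (\<lambda>k. Y (k - p) (D k y)))"
    by blast
  have F: "\<And>y. finite (F y)" "\<And>y j. j \<notin> F y \<Longrightarrow> ten_eq sc 2 (Sx S j (Y (p + j) y)) tzero"
    "\<And>y. ten_eq sc 2 (tsum (F y) (\<lambda>j. Sx S j (Y (p + j) y))) (tsum {k. D k y \<noteq> 0} (\<lambda>k. Y (k - p) (D k y)))"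
    using F0 by blast+
  have lf: "\<forall>\<psi>\<in>set [\<phi>1, \<phi>2]. lfn sc \<psi>" using assms Vd_lfn by auto
  have g0: "g j y = 0" if "j \<notin> F y" for j y
    unfolding g_def using pv_ten_eq[OF F(2)[OF that] _ lf] pv_tzero by simp
  have gsum: "(\<Sum>j\<in>F y. g j y) = (\<Sum>k\<in>{k. D k y \<noteq> 0}. pv [\<phi>1, \<phi>2] (Y (k - p) (D k y)))" for y
  proof -
    have "(\<Sum>j\<in>F y. g j y) = pv [\<phi>1, \<phi>2] (tsum (F y) (\<lambda>j. Sx S j (Y (p + j) y)))"
      unfolding g_def by (rule pv_tsum[OF F(1), symmetric]) (simp add: ftensD(1)[OF ftens_Sx[OF hY hS hY]])
    also have "\<dots> = pv [\<phi>1, \<phi>2] (tsum {k. D k y \<noteq> 0} (\<lambda>k. Y (k - p) (D k y)))"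
      by (rule pv_ten_eq[OF F(3) _ lf]) simp
    also have "\<dots> = (\<Sum>k\<in>{k. D k y \<noteq> 0}. pv [\<phi>1, \<phi>2] (Y (k - p) (D k y)))"
      by (rule pv_tsum[OF Dfin]) (simp add: ftensD(1)[OF hY])
    finally show ?thesis .
  qed
  define J where "J = (\<Union>ys\<in>fsupp W. F (ys!0))"
  have fJ: "finite J" unfolding J_def using fW F(1) by auto
  have s1: "?a j = (\<Sum>ys\<in>fsupp W. W ys * (g j (ys!0) * \<phi>3 (ys!1)))" for j
    unfolding W_def g_def by (rule P2_step1[OF assms])
  have zero: "?a j = 0" if "j \<notin> J" for j
    unfolding s1 using that g0 by (intro sum.neutral ballI) (auto simp: J_def)
  have sub: "fsupp ?a \<subseteq> J" using zero by (auto simp: fsupp_def)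
  have fin: "finite (fsupp ?a)" using finite_subset[OF sub fJ] .
  have "(\<Sum>j\<in>fsupp ?a. ?a j) = (\<Sum>j\<in>J. ?a j)"
    by (rule sum.mono_neutral_left[OF fJ sub]) (auto simp: fsupp_def)
  also have "\<dots> = (\<Sum>ys\<in>fsupp W. W ys * ((\<Sum>j\<in>J. g j (ys!0)) * \<phi>3 (ys!1)))"
    unfolding s1 sum_distrib_left sum_distrib_right by (subst sum.swap) (simp add: mult_ac)
  also have "\<dots> = (\<Sum>ys\<in>fsupp W. W ys * ((\<Sum>j\<in>F (ys!0). g j (ys!0)) * \<phi>3 (ys!1)))"
  proof (intro sum.cong refl)
    fix ys assume ys: "ys \<in> fsupp W"
    have "(\<Sum>j\<in>F (ys!0). g j (ys!0)) = (\<Sum>j\<in>J. g j (ys!0))"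
      by (rule sum.mono_neutral_left[OF fJ]) (use ys g0 in \<open>auto simp: J_def\<close>)
    thus "W ys * ((\<Sum>j\<in>J. g j (ys!0)) * \<phi>3 (ys!1)) = W ys * ((\<Sum>j\<in>F (ys!0). g j (ys!0)) * \<phi>3 (ys!1))" by simp
  qed
  also have "\<dots> = pv [\<phi>1, \<phi>2, \<phi>3] (YR Y p (Yx Y q t))"
    unfolding gsum W_def by (rule P2_step3[OF assms])
  finally show ?thesis using fin by blast
qed

lemma part2:
  "op_equiv Vd 1 3
       (\<lambda>t (p, q) j. SL S j (YR Y (q - j) (Yx Y (p + j) t)))
       (\<lambda>t (p, q). single (YR Y p (Yx Y q t)))"
  unfolding op_equiv_def
proof (intro ballI)
  fix \<Phi> assume \<Phi>: "\<Phi> \<in> dualten Vd 3"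
  let ?A = "\<lambda>t (p, q) j. SL S j (YR Y (q - j) (Yx Y (p + j) t))"
  let ?B = "\<lambda>t (p, q). single (YR Y p (Yx Y q t))"
  let ?cA = "\<lambda>t (m, k). single (YL Y m (Yx Y k t))"
  let ?cB = "\<lambda>t (m, k). single (YR Y (k - m) (Yx Y m t))"
  have fP: "finite (fsupp \<Phi>)" using \<Phi> by (rule dualtenD)
  have co: "in_dser Vd 1 (pcoeff \<Phi> ?cA) \<and> in_dser Vd 1 (pcoeff \<Phi> ?cB) \<and>
           (\<forall>t\<in>ftens 1. \<forall>mk. pcoeff \<Phi> ?cA t mk = pcoeff \<Phi> ?cB t mk)"
    using coassoc \<Phi> unfolding op_equiv_def by blast
  have vd3: "\<phi>s = [\<phi>s!0, \<phi>s!1, \<phi>s!2] \<and> \<phi>s!0 \<in> Vd \<and> \<phi>s!1 \<in> Vd \<and> \<phi>s!2 \<in> Vd" if "\<phi>s \<in> fsupp \<Phi>" for \<phi>s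
  proof -
    have l: "length \<phi>s = 3" using \<Phi> that by (simp add: dualten_def)
    have st: "set \<phi>s \<subseteq> Vd" using \<Phi> that by (simp add: dualten_def)
    obtain a b c where ab: "\<phi>s = [a, b, c]" using l len3 by metis
    thus ?thesis using st by simp
  qed
  have comp: "finite (fsupp (\<lambda>j. pv \<phi>s (?A t (p, q) j))) \<and>
      (\<Sum>j\<in>fsupp (\<lambda>j. pv \<phi>s (?A t (p, q) j)). pv \<phi>s (?A t (p, q) j)) = pv \<phi>s (YR Y p (Yx Y q t))"
    if "\<phi>s \<in> fsupp \<Phi>" "t \<in> ftens 1" for \<phi>s t p q
    using P2[of "\<phi>s!0" "\<phi>s!1" "\<phi>s!2" t q p] vd3[OF that(1)] that(2) by simp
  have finA: "finite (fsupp (\<lambda>j. pair \<Phi> (?A t mk j)))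
      \<and> pcoeff \<Phi> ?A t mk = pcoeff \<Phi> ?B t mk" if t: "t \<in> ftens 1" for t mk
  proof (cases mk)
    case (Pair p q)
    let ?f = "\<lambda>\<phi>s j. pv \<phi>s (?A t (p, q) j)"
    define J where "J = (\<Union>\<phi>s\<in>fsupp \<Phi>. fsupp (?f \<phi>s))"
    have fJ: "finite J" unfolding J_def using fP comp[OF _ t] by auto
    have pe: "pair \<Phi> (?A t (p, q) j) = (\<Sum>\<phi>s\<in>fsupp \<Phi>. \<Phi> \<phi>s * ?f \<phi>s j)" for j
      by (simp add: pair_pv)
    have sub: "fsupp (\<lambda>j. pair \<Phi> (?A t (p, q) j)) \<subseteq> J"
    proof
      fix j assume "j \<in> fsupp (\<lambda>j. pair \<Phi> (?A t (p, q) j))"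
      hence "(\<Sum>\<phi>s\<in>fsupp \<Phi>. \<Phi> \<phi>s * ?f \<phi>s j) \<noteq> 0" unfolding pe by (simp add: fsupp_def)
      then obtain \<phi>s where "\<phi>s \<in> fsupp \<Phi>" "?f \<phi>s j \<noteq> 0" by (metis (no_types, lifting) mult_zero_right sum.neutral)
      thus "j \<in> J" unfolding J_def fsupp_def by blast
    qed
    have fin: "finite (fsupp (\<lambda>j. pair \<Phi> (?A t (p, q) j)))" using finite_subset[OF sub fJ] .
    have "pcoeff \<Phi> ?A t (p, q) = (\<Sum>j\<in>J. pair \<Phi> (?A t (p, q) j))"
      unfolding pcoeff_def by (rule sum.mono_neutral_left[OF fJ sub]) (auto simp: fsupp_def)
    also have "\<dots> = (\<Sum>\<phi>s\<in>fsupp \<Phi>. \<Phi> \<phi>s * (\<Sum>j\<in>J. ?f \<phi>s j))"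
      unfolding pe sum_distrib_left by (rule sum.swap)
    also have "\<dots> = (\<Sum>\<phi>s\<in>fsupp \<Phi>. \<Phi> \<phi>s * pv \<phi>s (YR Y p (Yx Y q t)))"
    proof (intro sum.cong refl)
      fix \<phi>s assume h: "\<phi>s \<in> fsupp \<Phi>"
      have "(\<Sum>j\<in>J. ?f \<phi>s j) = (\<Sum>j\<in>fsupp (?f \<phi>s). ?f \<phi>s j)"
        by (rule sum.mono_neutral_right[OF fJ]) (use h in \<open>auto simp: J_def fsupp_def\<close>)
      also have "\<dots> = pv \<phi>s (YR Y p (Yx Y q t))" using comp[OF h t] by blast
      finally show "\<Phi> \<phi>s * (\<Sum>j\<in>J. ?f \<phi>s j) = \<Phi> \<phi>s * pv \<phi>s (YR Y p (Yx Y q t))" by simp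
    qed
    also have "\<dots> = pair \<Phi> (YR Y p (Yx Y q t))" by (simp add: pair_pv)
    also have "pair \<Phi> (YR Y p (Yx Y q t)) = pcoeff \<Phi> ?B t (p, q)"
    proof -
      have "pcoeff \<Phi> ?B t (p, q) = pair \<Phi> (YR Y p (Yx Y q t))" by (rule pcoeff_single) simp
      thus ?thesis by simp
    qed
    finally show ?thesis using fin Pair by simp
  qed
  have finB: "finite (fsupp (\<lambda>j. pair \<Phi> (?B t mk j)))" for t mk
  proof (cases mk)
    case (Pair m k) show ?thesis unfolding Pair by (rule pcoeff_single(2)) simp
  qed
  have Bco: "pcoeff \<Phi> ?B t (p, q) = pcoeff \<Phi> ?cA t (q, p + q)" if "t \<in> ftens 1" for t p q
  proof -
    have "pcoeff \<Phi> ?B t (p, q) = pcoeff \<Phi> ?cB t (q, p + q)"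
      unfolding pcoeff_coB by (rule pcoeff_single) simp
    thus ?thesis using co that by simp
  qed
  have dB: "in_dser Vd 1 (pcoeff \<Phi> ?B)"
  proof -
    have rep: "\<forall>mk. \<exists>\<Psi>\<in>dualten Vd 1. \<forall>t\<in>ftens 1. pcoeff \<Phi> ?B t mk = pair \<Psi> t"
    proof
      fix mk show "\<exists>\<Psi>\<in>dualten Vd 1. \<forall>t\<in>ftens 1. pcoeff \<Phi> ?B t mk = pair \<Psi> t"
      proof (cases mk)
        case (Pair p q)
        obtain \<Psi> where "\<Psi> \<in> dualten Vd 1" "\<forall>t\<in>ftens 1. pcoeff \<Phi> ?cA t (q, p + q) = pair \<Psi> t"
          using co unfolding in_dser_def by blast
        thus ?thesis using Bco Pair by auto
      qed
    qed
    obtain M K where MK: "\<forall>t\<in>ftens 1. \<forall>m n. (m > M \<or> n > K) \<longrightarrow> pcoeff \<Phi> ?cA t (m, n) = 0"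
      using co unfolding in_dser_def by blast
    have "\<forall>\<phi>s. \<exists>Kp. \<phi>s \<in> fsupp \<Phi> \<longrightarrow> (\<forall>p>Kp. \<forall>y. pv [\<phi>s!1, \<phi>s!2] (Y p y) = 0)"
      using Kbound vd3 by metis
    then obtain kb where kb: "\<And>\<phi>s p y. \<phi>s \<in> fsupp \<Phi> \<Longrightarrow> p > kb \<phi>s \<Longrightarrow> pv [\<phi>s!1, \<phi>s!2] (Y p y) = 0"
      by metis
    define K' where "K' = Max (insert 0 (kb ` fsupp \<Phi>))"
    have K': "kb \<phi>s \<le> K'" if "\<phi>s \<in> fsupp \<Phi>" for \<phi>s
      unfolding K'_def using fP that by (intro Max_ge) auto
    have bnd: "pcoeff \<Phi> ?B t (p, q) = 0" if t: "t \<in> ftens 1" and pq: "p > K' \<or> q > M" for t p q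
    proof (cases "q > M")
      case True thus ?thesis using Bco[OF t] MK t by simp
    next
      case False
      hence p: "p > K'" using pq by simp
      have ft: "finite (fsupp t)" using t by (rule ftensD)
      have W: "Yx Y q t \<in> ftens 2" by (rule ftens_Yx[OF hY hS ft])
      have "pcoeff \<Phi> ?B t (p, q) = pair \<Phi> (YR Y p (Yx Y q t))" by (rule pcoeff_single) simp
      also have "\<dots> = 0"
        unfolding pair_pv
      proof (intro sum.neutral ballI)
        fix \<phi>s assume h: "\<phi>s \<in> fsupp \<Phi>"
        have z: "pv [\<phi>s!1, \<phi>s!2] (Y p y) = 0" for y using kb[OF h] K'[OF h] p by simp
        obtain a b c where abc: "\<phi>s = [a, b, c]" using vd3[OF h] by blast
        have z': "pv [b, c] (Y p y) = 0" for y using z[of y] abc by simp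
        have "pv [a, b, c] (YR Y p (Yx Y q t)) = 0"
          unfolding pv_YR[OF hY hS W] z' by simp
        thus "\<Phi> \<phi>s * pv \<phi>s (YR Y p (Yx Y q t)) = 0" using abc by simp
      qed
      finally show ?thesis .
    qed
    show ?thesis unfolding in_dser_def using rep bnd by blast
  qed
  have dA: "in_dser Vd 1 (pcoeff \<Phi> ?A)"
    using dB in_dser_cong[of 1 "pcoeff \<Phi> ?A" "pcoeff \<Phi> ?B" Vd] finA by blast
  show "(\<forall>t\<in>ftens 1. \<forall>mk. finite (fsupp (\<lambda>j. pair \<Phi> (?A t mk j))) \<and> finite (fsupp (\<lambda>j. pair \<Phi> (?B t mk j)))) \<and>
        in_dser Vd 1 (pcoeff \<Phi> ?A) \<and> in_dser Vd 1 (pcoeff \<Phi> ?B) \<and>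
        (\<forall>t\<in>ftens 1. \<forall>mk. pcoeff \<Phi> ?A t mk = pcoeff \<Phi> ?B t mk)"
    using finA finB dA dB by blast
qed

end


theorem lemma3p1p5:
  fixes sc :: "'r::comm_ring_1 \<Rightarrow> 'v::ab_group_add \<Rightarrow> 'v"
    and Vd :: "('v \<Rightarrow> 'r) set" and cov :: "'v \<Rightarrow> 'r"
    and D :: "int \<Rightarrow> 'v \<Rightarrow> 'v" and Y :: "int \<Rightarrow> 'v \<Rightarrow> ('r,'v) ten"
    and S :: "int \<Rightarrow> 'v \<Rightarrow> 'v \<Rightarrow> ('r,'v) ten"
  assumes "bmv_coalgebra sc Vd cov D Y S"
  shows
    \<comment> \<open>(1) translation: Y(z) D(w) == (id (x) D(w)) Y(zw)\<close>
    "op_equiv Vd 1 2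
       (\<lambda>t (m, k). single (Yx Y m (Dx D k t)))
       (\<lambda>t (m, k). single (DR D (k - m) (Yx Y m t)))
     \<and>
     \<comment> \<open>(2) colocality: (S(w/z) (x) id)(id (x) Y(w)) Y(z) == (id (x) Y(z)) Y(w)\<close>
     op_equiv Vd 1 3
       (\<lambda>t (p, q) j. SL S j (YR Y (q - j) (Yx Y (p + j) t)))
       (\<lambda>t (p, q). single (YR Y p (Yx Y q t)))"
  using part1[OF assms] part2[OF assms] by blast

end
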